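(* There exists a haltingly correct CRN protocol $\Pi=(\mathcal{S},\mathcal{R})$ such that $\operatorname{RT}_{\mathrm{halt}}^{\Pi}(n)=O(n)$, but if the minimum in the definition of $\operatorname{RT}_{\mathrm{halt}}^{\Pi}(n)$ is restricted to runtime policies $\varrho$ with $\varrho(\mathbf{c})\supseteq\mathcal{E}(\mathbf{c})$ for every configuration $\mathbf{c}$, then the resulting quantity is $\Omega(n\log n)$.
   Context: $\mathcal{E}(\mathbf{c})$ denotes the set of reactions that escape from the strongly connected component of $\mathbf{c}$ in the configuration digraph $D^{\Pi}$ (which has an $\alpha$-labeled edge $\mathbf{c}\to\alpha(\mathbf{c})$ for each configuration $\mathbf{c}$ and each $\alpha\in\operatorname{app}(\mathbf{c})$); a reaction $\alpha$ escapes from a component $S$ if $\alpha\in\operatorname{app}(\mathbf{c})$ and $\alpha(\mathbf{c})\notin S$ for all $\mathbf{c}\in S$. CRN model: $\Pi=(\mathcal{S},\mathcal{R})$, finite species set, finite reaction set $\mathcal{R}\subset\mathbb{N}^{\mathcal{S}}\times\mathbb{N}^{\mathcal{S}}$; reactions $(\mathbf{r},\mathbf{p})$ with $\|\mathbf{r}\|_1\in\{1,2\}$, $\|\mathbf{r}\|_1\le\|\mathbf{p}\|_1$; every $\mathbf{r}$ with $1\le\|\mathbf{r}\|_1\le2$ has a nonempty set $\mathcal{R}(\mathbf{r})$ of reactions; void reactions ($\mathbf{r}=\mathbf{p}$) alone in their $\mathcal{R}(\mathbf{r})$; $\operatorname{NV}(\mathcal{R})$ non-void; finite density. Configurations $\mathbf{c}\in\mathbb{N}^{\mathcal{S}}$,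 $\|\mathbf{c}\|_1\ge1$; applicability $\mathbf{r}\le\mathbf{c}$, result $\alpha(\mathbf{c})=\mathbf{c}-\mathbf{r}+\mathbf{p}$; $\operatorname{app}(\mathbf{c})$; reachability $\stackrel{*}{\rightharpoonup}$; $\mathrm{halt}(Z)=\{\mathbf{c}\in Z:\mathbf{c}\stackrel{*}{\rightharpoonup}\mathbf{c}'\Rightarrow\mathbf{c}'=\mathbf{c}\}$. Weakly fair executions $\langle\mathbf{c}^t,\alpha^t\rangle$: every reaction applicable at step $t$ is later scheduled or becomes inapplicable. Correctness is w.r.t. an interface $\mathcal{I}=(\mathcal{U},\mu,\mathcal{C})$ giving target sets $Z_{\mathcal{I}}(\mathbf{c}^0)=\{\mathbf{c}:(\mu(\mathbf{c}^0),\mu(\mathbf{c}))\in\mathcal{C}\}$ and valid initial configurations (those with $Z_{\mathcal{I}}(\mathbf{c}^0)\ne\emptyset$); haltingly correct: every weakly fair valid execution reaches $\mathrm{halt}(Z_{\mathcal{I}}(\mathbf{c}^0))$, first such step = halting step. Runtime: stochastic scheduler with volume $\varphi=\Theta(n)$, $n=\|\mathbf{c}^0\|_1$; propensity $\pi_{\mathbf{c}}(\alpha)=\mathbf{c}(A)/|\mathcal{R}(\mathbf{r})|$ ($\mathbf{r}=A$), $\frac1\varphi\binom{\mathbf{c}(A)}2/|\mathcal{R}(\mathbf{r})|$ ($\mathbf{r}=2A$), $\frac1\varphi\mathbf{c}(A)\mathbf{c}(B)/|\mathcal{R}(\mathbf{r})|$ ($\mathbf{r}=A+B$); step time span $1/\pi_{\mathbf{c}}(\mathcal{R})$.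 $\tau(\eta,t,Q)$ = least $s>t$ with $\alpha^{s-1}\in Q$ or every reaction of $Q$ inapplicable at some step in $[t,s]$. Runtime policy $\varrho(\mathbf{c})\subseteq\operatorname{NV}(\mathcal{R})$; skipping policy $\sigma(t)\ge t$; rounds $t(0)=0$, $t_e(i)=\sigma(t(i))$, $\mathbf{e}^i=\mathbf{c}^{t_e(i)}$, $t(i+1)=\tau(\eta,t_e(i),\varrho(\mathbf{e}^i))$; $\operatorname{TC}^{\varrho}(\mathbf{c})$ = expected total time span of the steps before $\tau(\eta_r,0,\varrho(\mathbf{c}))$ of a stochastic execution from $\mathbf{c}$; $\operatorname{RT}_{\mathrm{halt}}^{\varrho,\sigma}(\eta)=\sum_{i<i^*}\operatorname{TC}^{\varrho}(\mathbf{e}^i)$, $i^*=\min\{i:t(i)\ge t^*\}$; $\operatorname{RT}_{\mathrm{halt}}^{\Pi}(n)=\min_\varrho\max_{\eta,\sigma}\operatorname{RT}_{\mathrm{halt}}^{\varrho,\sigma}(\eta)$, max over weakly fair valid executions with initial molecular count $n$ and all skipping policies. *)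

theory Defs
  imports Complex_Main "HOL-Library.Extended_Nonnegative_Real" "HOL-Library.Landau_Symbols"
begin

type_synonym conf = "nat \<Rightarrow> nat"
type_synonym rxn = "conf \<times> conf"

definition supp_in :: "nat set \<Rightarrow> conf \<Rightarrow> bool" where
  "supp_in S c \<longleftrightarrow> (\<forall>A. A \<notin> S \<longrightarrow> c A = 0)"

definition norm1 :: "nat set \<Rightarrow> conf \<Rightarrow> nat" where
  "norm1 S c = (\<Sum>A\<in>S. c A)"

definition is_config :: "nat set \<Rightarrow> conf \<Rightarrow> bool" where
  "is_config S c \<longleftrightarrow> supp_in S c \<and> norm1 S c \<ge> 1"

definition Rof :: "rxn set \<Rightarrow> conf \<Rightarrow> rxn set" where
  "Rof R r = {\<alpha>\<in>R. fst \<alpha> = r}"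

definition NV :: "rxn set \<Rightarrow> rxn set" where
  "NV R = {\<alpha>\<in>R. fst \<alpha> \<noteq> snd \<alpha>}"

definition crn :: "nat set \<Rightarrow> rxn set \<Rightarrow> bool" where
  "crn S R \<longleftrightarrow> finite S \<and> finite R
    \<and> (\<forall>(r,p)\<in>R. supp_in S r \<and> supp_in S p \<and> norm1 S r \<in> {1,2} \<and> norm1 S r \<le> norm1 S p)
    \<and> (\<forall>r. supp_in S r \<and> 1 \<le> norm1 S r \<and> norm1 S r \<le> 2 \<longrightarrow> Rof R r \<noteq> {})
    \<and> (\<forall>r. (r,r) \<in> R \<longrightarrow> Rof R r = {(r,r)})"

definition app :: "rxn set \<Rightarrow> conf \<Rightarrow> rxn set" where
  "app R c = {\<alpha>\<in>R. fst \<alpha> \<le> c}"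

definition apply_rxn :: "rxn \<Rightarrow> conf \<Rightarrow> conf" where
  "apply_rxn \<alpha> c = (\<lambda>A. c A - fst \<alpha> A + snd \<alpha> A)"

definition step :: "nat set \<Rightarrow> rxn set \<Rightarrow> conf \<Rightarrow> conf \<Rightarrow> bool" where
  "step S R c c' \<longleftrightarrow> is_config S c \<and> (\<exists>\<alpha>\<in>app R c. c' = apply_rxn \<alpha> c)"

definition reach :: "nat set \<Rightarrow> rxn set \<Rightarrow> conf \<Rightarrow> conf \<Rightarrow> bool" where
  "reach S R = (step S R)\<^sup>*\<^sup>*"

definition halt :: "nat set \<Rightarrow> rxn set \<Rightarrow> conf set \<Rightarrow> conf set" where
  "halt S R Z = {c\<in>Z. \<forall>c'. reach S R c c' \<longrightarrow> c' = c}"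

definition interface :: "nat set \<Rightarrow> conf set \<Rightarrow> (conf \<Rightarrow> conf) \<Rightarrow> (conf \<times> conf) set \<Rightarrow> bool" where
  "interface S U \<mu> C \<longleftrightarrow> (\<forall>c. is_config S c \<longrightarrow> \<mu> c \<in> U) \<and> C \<subseteq> U \<times> U"

definition target :: "nat set \<Rightarrow> (conf \<Rightarrow> conf) \<Rightarrow> (conf \<times> conf) set \<Rightarrow> conf \<Rightarrow> conf set" where
  "target S \<mu> C c0 = {c. is_config S c \<and> (\<mu> c0, \<mu> c) \<in> C}"

definition valid :: "nat set \<Rightarrow> (conf \<Rightarrow> conf) \<Rightarrow> (conf \<times> conf) set \<Rightarrow> conf \<Rightarrow> bool" where
  "valid S \<mu> C c0 \<longleftrightarrow> is_config S c0 \<and> target S \<mu> C c0 \<noteq> {}"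

definition execution :: "nat set \<Rightarrow> rxn set \<Rightarrow> (nat \<Rightarrow> conf) \<Rightarrow> (nat \<Rightarrow> rxn) \<Rightarrow> bool" where
  "execution S R cs as \<longleftrightarrow> is_config S (cs 0)
     \<and> (\<forall>t. as t \<in> app R (cs t) \<and> cs (Suc t) = apply_rxn (as t) (cs t))"

definition weakly_fair :: "rxn set \<Rightarrow> (nat \<Rightarrow> conf) \<Rightarrow> (nat \<Rightarrow> rxn) \<Rightarrow> bool" where
  "weakly_fair R cs as \<longleftrightarrow>
     (\<forall>t. \<forall>\<alpha>\<in>app R (cs t). \<exists>s\<ge>t. as s = \<alpha> \<or> \<alpha> \<notin> app R (cs s))"

definition halting_correct :: "nat set \<Rightarrow> rxn set \<Rightarrow> (conf \<Rightarrow> conf) \<Rightarrow> (conf \<times> conf) set \<Rightarrow> bool" where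
  "halting_correct S R \<mu> C \<longleftrightarrow>
     (\<forall>cs as. execution S R cs as \<and> weakly_fair R cs as \<and> valid S \<mu> C (cs 0)
        \<longrightarrow> (\<exists>t. cs t \<in> halt S R (target S \<mu> C (cs 0))))"

definition halting_step :: "nat set \<Rightarrow> rxn set \<Rightarrow> (conf \<Rightarrow> conf) \<Rightarrow> (conf \<times> conf) set \<Rightarrow> (nat \<Rightarrow> conf) \<Rightarrow> nat" where
  "halting_step S R \<mu> C cs = (LEAST t. cs t \<in> halt S R (target S \<mu> C (cs 0)))"

definition finite_density :: "nat set \<Rightarrow> rxn set \<Rightarrow> (conf \<Rightarrow> conf) \<Rightarrow> (conf \<times> conf) set \<Rightarrow> bool" where
  "finite_density S R \<mu> C \<longleftrightarrow>
     (\<exists>\<delta>::real. \<forall>c0 c. valid S \<mu> C c0 \<and> reach S R c0 c \<longrightarrow> real (norm1 S c) \<le> \<delta> * real (norm1 S c0))"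

definition scc :: "nat set \<Rightarrow> rxn set \<Rightarrow> conf \<Rightarrow> conf set" where
  "scc S R c = {d. reach S R c d \<and> reach S R d c}"

definition escape :: "nat set \<Rightarrow> rxn set \<Rightarrow> conf \<Rightarrow> rxn set" where
  "escape S R c = {\<alpha>\<in>R. \<forall>d\<in>scc S R c. \<alpha> \<in> app R d \<and> apply_rxn \<alpha> d \<notin> scc S R c}"

definition unitv :: "nat \<Rightarrow> conf" where
  "unitv A = (\<lambda>X. if X = A then 1 else 0)"

definition propensity :: "real \<Rightarrow> rxn set \<Rightarrow> conf \<Rightarrow> rxn \<Rightarrow> real" where
  "propensity vol R c \<alpha> =
     (let r = fst \<alpha> in
       (if (\<exists>A. r = unitv A) then real (c (THE A. r = unitv A))
        else if (\<exists>A. r = (\<lambda>X. 2 * unitv A X)) then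
          real (c (THE A. r = (\<lambda>X. 2 * unitv A X)) choose 2) / vol
        else (case (SOME (A,B). A \<noteq> B \<and> r = (\<lambda>X. unitv A X + unitv B X)) of
               (A,B) \<Rightarrow> real (c A) * real (c B) / vol))
       / real (card (Rof R r)))"

definition total_prop :: "real \<Rightarrow> rxn set \<Rightarrow> conf \<Rightarrow> real" where
  "total_prop vol R c = (\<Sum>\<alpha>\<in>R. propensity vol R c \<alpha>)"

definition span :: "real \<Rightarrow> rxn set \<Rightarrow> conf \<Rightarrow> real" where
  "span vol R c = 1 / total_prop vol R c"

definition stop_cond :: "rxn set \<Rightarrow> (nat \<Rightarrow> conf) \<Rightarrow> (nat \<Rightarrow> rxn) \<Rightarrow> nat \<Rightarrow> rxn set \<Rightarrow> nat \<Rightarrow> bool" where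
  "stop_cond R cs as t Q s \<longleftrightarrow>
     as (s - 1) \<in> Q \<or> (\<forall>\<beta>\<in>Q. \<exists>u. t \<le> u \<and> u \<le> s \<and> \<beta> \<notin> app R (cs u))"

definition tau :: "rxn set \<Rightarrow> (nat \<Rightarrow> conf) \<Rightarrow> (nat \<Rightarrow> rxn) \<Rightarrow> nat \<Rightarrow> rxn set \<Rightarrow> nat" where
  "tau R cs as t Q = (LEAST s. t < s \<and> stop_cond R cs as t Q s)"

text \<open>Finite prefixes of a stochastic execution from c, given by the scheduled reactions.\<close>
fun run :: "conf \<Rightarrow> rxn list \<Rightarrow> conf list" where
  "run c [] = [c]"
| "run c (\<alpha> # xs) = c # run (apply_rxn \<alpha> c) xs"

fun path_prob :: "real \<Rightarrow> rxn set \<Rightarrow> conf \<Rightarrow> rxn list \<Rightarrow> real" where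
  "path_prob vol R c [] = 1"
| "path_prob vol R c (\<alpha> # xs) =
     (if \<alpha> \<in> app R c then propensity vol R c \<alpha> / total_prop vol R c else 0)
     * path_prob vol R (apply_rxn \<alpha> c) xs"

text \<open>TC: expected total time span of the steps t < tau(eta_r, 0, Q) of a stochastic
  execution from c, written as the sum over t of the expected time span of step t
  restricted to the event t < tau (which is determined by the prefix of length t).\<close>
definition TC :: "real \<Rightarrow> rxn set \<Rightarrow> rxn set \<Rightarrow> conf \<Rightarrow> ennreal" where
  "TC vol R Q c = (\<Sum>t. \<Sum>xs\<in>{xs. set xs \<subseteq> R \<and> length xs = t}.
      ennreal (path_prob vol R c xs *
        (if \<not> (\<exists>s. 0 < s \<and> s \<le> t \<and> stop_cond R (\<lambda>u. run c xs ! u) (\<lambda>i. xs ! i) 0 Q s)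
         then span vol R (last (run c xs)) else 0)))"

primrec round_start :: "rxn set \<Rightarrow> (conf \<Rightarrow> rxn set) \<Rightarrow> (nat \<Rightarrow> nat) \<Rightarrow> (nat \<Rightarrow> conf) \<Rightarrow> (nat \<Rightarrow> rxn) \<Rightarrow> nat \<Rightarrow> nat" where
  "round_start R \<rho> \<sigma> cs as 0 = 0"
| "round_start R \<rho> \<sigma> cs as (Suc i) =
     tau R cs as (\<sigma> (round_start R \<rho> \<sigma> cs as i)) (\<rho> (cs (\<sigma> (round_start R \<rho> \<sigma> cs as i))))"

definition RT_pol :: "real \<Rightarrow> nat set \<Rightarrow> rxn set \<Rightarrow> (conf \<Rightarrow> conf) \<Rightarrow> (conf \<times> conf) set
    \<Rightarrow> (conf \<Rightarrow> rxn set) \<Rightarrow> (nat \<Rightarrow> nat) \<Rightarrow> (nat \<Rightarrow> conf) \<Rightarrow> (nat \<Rightarrow> rxn) \<Rightarrow> ennreal" where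
  "RT_pol vol S R \<mu> C \<rho> \<sigma> cs as =
     (let istar = (LEAST i. round_start R \<rho> \<sigma> cs as i \<ge> halting_step S R \<mu> C cs) in
      \<Sum>i<istar. TC vol R (\<rho> (cs (\<sigma> (round_start R \<rho> \<sigma> cs as i))))
                        (cs (\<sigma> (round_start R \<rho> \<sigma> cs as i))))"

definition runtime_policy :: "nat set \<Rightarrow> rxn set \<Rightarrow> (conf \<Rightarrow> rxn set) \<Rightarrow> bool" where
  "runtime_policy S R \<rho> \<longleftrightarrow> (\<forall>c. is_config S c \<longrightarrow> \<rho> c \<subseteq> NV R)"

text \<open>RT_halt restricted to a given class Pol of runtime policies; volume function phi of n.\<close>
definition RT_halt :: "(nat \<Rightarrow> real) \<Rightarrow> nat set \<Rightarrow> rxn set \<Rightarrow> (conf \<Rightarrow> conf) \<Rightarrow> (conf \<times> conf) set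
    \<Rightarrow> (conf \<Rightarrow> rxn set) set \<Rightarrow> nat \<Rightarrow> ennreal" where
  "RT_halt \<phi> S R \<mu> C Pol n =
     (INF \<rho>\<in>{\<rho>\<in>Pol. runtime_policy S R \<rho>}.
        SUP (cs, as, \<sigma>)\<in>{(cs, as, \<sigma>). execution S R cs as \<and> weakly_fair R cs as
              \<and> valid S \<mu> C (cs 0) \<and> norm1 S (cs 0) = n \<and> (\<forall>t. t \<le> \<sigma> t)}.
          RT_pol (\<phi> n) S R \<mu> C \<rho> \<sigma> cs as)"

end

theory Submission
  imports Defs
begin

lemma unitv_apply: "unitv C X = (if X = C then 1 else 0)" by (simp add: unitv_def)
lemma unitv_inj[simp]: "unitv A = unitv B \<longleftrightarrow> A = B"
  by (metis unitv_def zero_neq_one)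

lemma prop_unit: "propensity vol R c (unitv A, p) = real (c A) / real (card (Rof R (unitv A)))"
proof -
  have e: "(THE B. unitv A = unitv B) = A" by auto
  have h: "\<exists>B. unitv A = unitv B" by blast
  show ?thesis unfolding propensity_def Let_def fst_conv
    by (subst if_P[OF h], simp only: e)
qed

lemma prop_double: "propensity vol R c ((\<lambda>X. 2 * unitv A X), p) =
    real (c A choose 2) / vol / real (card (Rof R (\<lambda>X. 2 * unitv A X)))"
proof -
  have n1: "\<not> (\<exists>B. (\<lambda>X. 2 * unitv A X) = unitv B)"
  proof
    assume "\<exists>B. (\<lambda>X. 2 * unitv A X) = unitv B"
    then obtain B where "(\<lambda>X. 2 * unitv A X) = unitv B" by blast
    then have "2 * unitv A A = unitv B A" by metis
    then show False by (simp add: unitv_apply split: if_splits)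
  qed
  have e: "(THE B. (\<lambda>X. 2 * unitv A X) = (\<lambda>X. 2 * unitv B X)) = A"
  proof (rule the_equality)
    fix B assume "(\<lambda>X. 2 * unitv A X) = (\<lambda>X. 2 * unitv B X)"
    then have "2 * unitv A A = 2 * unitv B A" by metis
    then show "B = A" by (simp add: unitv_apply split: if_splits)
  qed simp
  have h2: "\<exists>C. (\<lambda>X. 2 * unitv A X) = (\<lambda>X. 2 * unitv C X)" by blast
  show ?thesis unfolding propensity_def Let_def fst_conv
    by (subst if_not_P[OF n1], subst if_P[OF h2], simp only: e)
qed

lemma prop_pair:
  assumes AB: "A \<noteq> B"
  shows "propensity vol R c ((\<lambda>X. unitv A X + unitv B X), p) =
    real (c A) * real (c B) / vol / real (card (Rof R (\<lambda>X. unitv A X + unitv B X)))"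
proof -
  let ?r = "\<lambda>X. unitv A X + unitv B X"
  have n1: "\<not> (\<exists>C. ?r = unitv C)"
  proof
    assume "\<exists>C. ?r = unitv C"
    then obtain C where h: "?r = unitv C" by blast
    have "unitv A A + unitv B A = unitv C A" using fun_cong[OF h, of A] by simp
    moreover have "unitv A B + unitv B B = unitv C B" using fun_cong[OF h, of B] by simp
    ultimately show False using AB unfolding unitv_apply by (cases "A = C"; cases "B = C"; simp)
  qed
  have n2: "\<not> (\<exists>C. ?r = (\<lambda>X. 2 * unitv C X))"
  proof
    assume "\<exists>C. ?r = (\<lambda>X. 2 * unitv C X)"
    then obtain C where h: "?r = (\<lambda>X. 2 * unitv C X)" by blast
    have "unitv A A + unitv B A = 2 * unitv C A" using fun_cong[OF h, of A] by simp
    then show False using AB unfolding unitv_apply by (cases "A = C"; simp)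
  qed
  let ?P = "\<lambda>(x, y). x \<noteq> y \<and> ?r = (\<lambda>X. unitv x X + unitv y X)"
  have "?P (A, B)" using AB by simp
  then have sP: "?P (SOME q. ?P q)" by (rule someI)
  obtain x y where xy: "(SOME q. ?P q) = (x, y)" by fastforce
  with sP have hxy: "x \<noteq> y" "?r = (\<lambda>X. unitv x X + unitv y X)" by auto
  have "unitv A x + unitv B x = unitv x x + unitv y x" using fun_cong[OF hxy(2), of x] by simp
  then have "x \<in> {A, B}" using hxy(1) unfolding unitv_apply by (cases "x = A"; cases "x = B"; simp)
  have "unitv A y + unitv B y = unitv x y + unitv y y" using fun_cong[OF hxy(2), of y] by simp
  then have "y \<in> {A, B}" using hxy(1) unfolding unitv_apply by (cases "y = A"; cases "y = B"; simp)
  with hxy(1) \<open>x \<in> {A, B}\<close> have "(x = A \<and> y = B) \<or> (x = B \<and> y = A)" by auto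
  then have "real (c x) * real (c y) = real (c A) * real (c B)" by auto
  then show ?thesis unfolding propensity_def Let_def fst_conv
    by (subst if_not_P[OF n1], subst if_not_P[OF n2], simp only: xy prod.case)
qed

definition mk :: "nat \<Rightarrow> nat \<Rightarrow> nat \<Rightarrow> conf" where
  "mk a b d = (\<lambda>X. if X = 0 then a else if X = 1 then b else if X = 2 then d else 0)"

lemma mk_app[simp]: "mk a b d 0 = a" "mk a b d 1 = b" "mk a b d (Suc 0) = b" "mk a b d 2 = d"
  by (auto simp: mk_def)

lemma mk_out[simp]: "X \<notin> {0,1,2} \<Longrightarrow> mk a b d X = 0"
  by (auto simp: mk_def)

lemma mk_eq_iff[simp]: "mk a b d = mk a' b' d' \<longleftrightarrow> a = a' \<and> b = b' \<and> d = d'"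
  by (metis mk_app(1,2,4))

lemma mk_le_iff: "mk a b d \<le> c \<longleftrightarrow> a \<le> c 0 \<and> b \<le> c 1 \<and> d \<le> c 2"
proof
  assume "mk a b d \<le> c" then show "a \<le> c 0 \<and> b \<le> c 1 \<and> d \<le> c 2"
    unfolding le_fun_def by (metis mk_app(1,2,4))
next
  assume h: "a \<le> c 0 \<and> b \<le> c 1 \<and> d \<le> c 2"
  show "mk a b d \<le> c" unfolding le_fun_def
  proof
    fix X show "mk a b d X \<le> c X" using h
      by (cases "X = 0"; cases "X = 1"; cases "X = 2"; simp)
  qed
qed

definition SS :: "nat set" where "SS = {0, 1, 2}"

lemma norm1_SS: "norm1 SS c = c 0 + c 1 + c 2"
  by (simp add: norm1_def SS_def)

lemma supp_mk: "supp_in SS (mk a b d)"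
  unfolding supp_in_def SS_def by simp

lemma supp_eq_mk: assumes "supp_in SS c" shows "c = mk (c 0) (c 1) (c 2)"
proof (rule ext)
  fix X show "c X = mk (c 0) (c 1) (c 2) X" using assms unfolding supp_in_def SS_def
    by (cases "X = 0"; cases "X = 1"; cases "X = 2"; simp)
qed

lemma apply_mk: "apply_rxn (mk r0 r1 r2, mk p0 p1 p2) (mk a b d) = mk (a - r0 + p0) (b - r1 + p1) (d - r2 + p2)"
  unfolding apply_rxn_def
proof (rule ext)
  fix X show "mk a b d X - fst (mk r0 r1 r2, mk p0 p1 p2) X + snd (mk r0 r1 r2, mk p0 p1 p2) X =
     mk (a - r0 + p0) (b - r1 + p1) (d - r2 + p2) X"
    by (cases "X = 0"; cases "X = 1"; cases "X = 2"; simp)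
qed

lemma mk100: "mk 1 0 0 = unitv 0" and mk010: "mk 0 1 0 = unitv 1" and mk001: "mk 0 0 1 = unitv 2"
  by (rule ext, simp add: mk_def unitv_apply)+

lemma mk200: "mk 2 0 0 = (\<lambda>X. 2 * unitv 0 X)" and mk020: "mk 0 2 0 = (\<lambda>X. 2 * unitv 1 X)"
  and mk002: "mk 0 0 2 = (\<lambda>X. 2 * unitv 2 X)"
  by (rule ext, simp add: mk_def unitv_apply)+

lemma mk110: "mk 1 1 0 = (\<lambda>X. unitv 0 X + unitv 1 X)" and mk101: "mk 1 0 1 = (\<lambda>X. unitv 0 X + unitv 2 X)"
  and mk011: "mk 0 1 1 = (\<lambda>X. unitv 1 X + unitv 2 X)"
  by (rule ext, simp add: mk_def unitv_apply)+

definition "alp = (mk 2 0 0, mk 0 0 2)"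
definition "bet = (mk 1 1 0, mk 1 0 1)"
definition "VV = {(mk 1 0 0, mk 1 0 0), (mk 0 1 0, mk 0 1 0), (mk 0 0 1, mk 0 0 1),
   (mk 0 2 0, mk 0 2 0), (mk 0 0 2, mk 0 0 2), (mk 1 0 1, mk 1 0 1), (mk 0 1 1, mk 0 1 1)}"
definition "RR = insert alp (insert bet VV)"

lemma finite_RR: "finite RR" by (simp add: RR_def VV_def)
lemma alp_RR: "alp \<in> RR" and bet_RR: "bet \<in> RR" by (simp_all add: RR_def)
lemma alp_notin_VV: "alp \<notin> VV" and bet_notin_VV: "bet \<notin> VV" and alp_ne_bet: "alp \<noteq> bet"
  by (simp_all add: VV_def alp_def bet_def)

lemma VV_void: "x \<in> VV \<Longrightarrow> snd x = fst x" by (auto simp: VV_def)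

lemma Rof_RR: "x \<in> RR \<Longrightarrow> Rof RR (fst x) = {x}"
  unfolding Rof_def RR_def VV_def alp_def bet_def by auto

lemma card_Rof_RR: "x \<in> RR \<Longrightarrow> card (Rof RR (fst x)) = 1"
  by (simp add: Rof_RR)

lemma NV_RR: "NV RR = {alp, bet}"
  unfolding NV_def RR_def VV_def alp_def bet_def by auto

lemma RR_L: "x \<in> RR \<Longrightarrow> x \<noteq> alp \<Longrightarrow> fst x 0 = snd x 0"
  unfolding RR_def VV_def alp_def bet_def by auto

lemma card_L: "card (Rof RR (mk 1 0 0)) = 1"
  using card_Rof_RR[of "(mk 1 0 0, mk 1 0 0)"] unfolding RR_def VV_def alp_def bet_def by simp

lemma prop_L: "propensity vol RR c (mk 1 0 0, p) = real (c 0)"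
  using card_L unfolding mk100 by (simp add: prop_unit)

lemma card_A: "card (Rof RR (mk 0 1 0)) = 1"
  using card_Rof_RR[of "(mk 0 1 0, mk 0 1 0)"] unfolding RR_def VV_def alp_def bet_def by simp

lemma prop_A: "propensity vol RR c (mk 0 1 0, p) = real (c 1)"
  using card_A unfolding mk010 by (simp add: prop_unit)

lemma card_B: "card (Rof RR (mk 0 0 1)) = 1"
  using card_Rof_RR[of "(mk 0 0 1, mk 0 0 1)"] unfolding RR_def VV_def alp_def bet_def by simp

lemma prop_B: "propensity vol RR c (mk 0 0 1, p) = real (c 2)"
  using card_B unfolding mk001 by (simp add: prop_unit)

lemma card_LL: "card (Rof RR (mk 2 0 0)) = 1"
  using card_Rof_RR[of "(mk 2 0 0, mk 0 0 2)"] unfolding RR_def VV_def alp_def bet_def by simp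

lemma prop_LL: "propensity vol RR c (mk 2 0 0, p) = real (c 0 choose 2) / vol"
  using card_LL unfolding mk200 by (simp add: prop_double)

lemma card_AA: "card (Rof RR (mk 0 2 0)) = 1"
  using card_Rof_RR[of "(mk 0 2 0, mk 0 2 0)"] unfolding RR_def VV_def alp_def bet_def by simp

lemma prop_AA: "propensity vol RR c (mk 0 2 0, p) = real (c 1 choose 2) / vol"
  using card_AA unfolding mk020 by (simp add: prop_double)

lemma card_BB: "card (Rof RR (mk 0 0 2)) = 1"
  using card_Rof_RR[of "(mk 0 0 2, mk 0 0 2)"] unfolding RR_def VV_def alp_def bet_def by simp

lemma prop_BB: "propensity vol RR c (mk 0 0 2, p) = real (c 2 choose 2) / vol"
  using card_BB unfolding mk002 by (simp add: prop_double)

lemma card_LA: "card (Rof RR (mk 1 1 0)) = 1"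
  using card_Rof_RR[of "(mk 1 1 0, mk 1 0 1)"] unfolding RR_def VV_def alp_def bet_def by simp

lemma prop_LA: "propensity vol RR c (mk 1 1 0, p) = real (c 0) * real (c 1) / vol"
  using card_LA unfolding mk110 by (simp add: prop_pair)

lemma card_LB: "card (Rof RR (mk 1 0 1)) = 1"
  using card_Rof_RR[of "(mk 1 0 1, mk 1 0 1)"] unfolding RR_def VV_def alp_def bet_def by simp

lemma prop_LB: "propensity vol RR c (mk 1 0 1, p) = real (c 0) * real (c 2) / vol"
  using card_LB unfolding mk101 by (simp add: prop_pair)

lemma card_AB: "card (Rof RR (mk 0 1 1)) = 1"
  using card_Rof_RR[of "(mk 0 1 1, mk 0 1 1)"] unfolding RR_def VV_def alp_def bet_def by simp

lemma prop_AB: "propensity vol RR c (mk 0 1 1, p) = real (c 1) * real (c 2) / vol"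
  using card_AB unfolding mk011 by (simp add: prop_pair)

lemma RR_cases: "x \<in> RR \<Longrightarrow> x = (mk 2 0 0, mk 0 0 2) \<or> x = (mk 1 1 0, mk 1 0 1) \<or>
  x = (mk 1 0 0, mk 1 0 0) \<or> x = (mk 0 1 0, mk 0 1 0) \<or> x = (mk 0 0 1, mk 0 0 1) \<or>
   x = (mk 0 2 0, mk 0 2 0) \<or> x = (mk 0 0 2, mk 0 0 2) \<or> x = (mk 1 0 1, mk 1 0 1) \<or> x = (mk 0 1 1, mk 0 1 1)"
  unfolding RR_def VV_def alp_def bet_def by blast

lemma prop_RR_nonneg: "x \<in> RR \<Longrightarrow> 0 < vol \<Longrightarrow> 0 \<le> propensity vol RR c x"
  apply (drule RR_cases) apply (elim disjE)
  by (simp_all only: prop_L prop_A prop_B prop_LL prop_AA prop_BB prop_LA prop_LB prop_AB) simp_all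

lemma prop_RR_inapp: "x \<in> RR \<Longrightarrow> \<not> fst x \<le> c \<Longrightarrow> propensity vol RR c x = 0"
  apply (drule RR_cases) apply (elim disjE)
  by (simp_all only: prop_L prop_A prop_B prop_LL prop_AA prop_BB prop_LA prop_LB prop_AB fst_conv)
   (auto simp: mk_le_iff)

lemma prop_alp: "propensity vol RR c alp = real (c 0 choose 2) / vol"
  unfolding alp_def by (rule prop_LL)
lemma prop_bet: "propensity vol RR c bet = real (c 0) * real (c 1) / vol"
  unfolding bet_def by (rule prop_LA)


lemma crn_RR: "crn SS RR"
proof -
  have a: "\<forall>(r,p)\<in>RR. supp_in SS r \<and> supp_in SS p \<and> norm1 SS r \<in> {1,2} \<and> norm1 SS r \<le> norm1 SS p"
  proof (intro ballI, clarify)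
    fix r p assume "(r, p) \<in> RR"
    from RR_cases[OF this] show "supp_in SS r \<and> supp_in SS p \<and> norm1 SS r \<in> {1,2} \<and> norm1 SS r \<le> norm1 SS p"
      by (elim disjE) (simp_all only: supp_mk norm1_SS prod.inject mk_app, simp_all)
  qed
  have b: "\<forall>r. supp_in SS r \<and> 1 \<le> norm1 SS r \<and> norm1 SS r \<le> 2 \<longrightarrow> Rof RR r \<noteq> {}"
  proof (intro allI impI)
    fix r assume h: "supp_in SS r \<and> 1 \<le> norm1 SS r \<and> norm1 SS r \<le> 2"
    then have r: "r = mk (r 0) (r 1) (r 2)" using supp_eq_mk by blast
    have s: "1 \<le> r 0 + r 1 + r 2" "r 0 + r 1 + r 2 \<le> 2" using h by (simp_all add: norm1_SS)
    have "\<exists>x\<in>RR. fst x = mk (r 0) (r 1) (r 2)"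
    proof -
      obtain a b d where abd: "a = r 0" "b = r 1" "d = r 2" by blast
      have "a \<le> 2" "b \<le> 2" "d \<le> 2" using s abd by auto
      then have "a = 0 \<or> a = 1 \<or> a = 2" "b = 0 \<or> b = 1 \<or> b = 2" "d = 0 \<or> d = 1 \<or> d = 2" by arith+
      then have "\<exists>x\<in>RR. fst x = mk a b d" using s abd
        apply (elim disjE)
        by (simp_all add: RR_def VV_def alp_def bet_def)
      then show ?thesis using abd by simp
    qed
    then show "Rof RR r \<noteq> {}" using r unfolding Rof_def by auto
  qed
  have c: "\<forall>r. (r,r) \<in> RR \<longrightarrow> Rof RR r = {(r,r)}"
    using Rof_RR by fastforce
  have "finite SS" by (simp add: SS_def)
  then show ?thesis unfolding crn_def using a b c finite_RR by blast
qed

lemma apply_comp: "apply_rxn (mk r0 r1 r2, mk p0 p1 p2) c 0 = c 0 - r0 + p0"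
  "apply_rxn (mk r0 r1 r2, mk p0 p1 p2) c 1 = c 1 - r1 + p1"
  "apply_rxn (mk r0 r1 r2, mk p0 p1 p2) c (Suc 0) = c (Suc 0) - r1 + p1"
  "apply_rxn (mk r0 r1 r2, mk p0 p1 p2) c 2 = c 2 - r2 + p2"
  by (simp_all add: apply_rxn_def)

lemma fst_mk_le: "fst (mk r0 r1 r2, p) \<le> c \<longleftrightarrow> r0 \<le> c 0 \<and> r1 \<le> c 1 \<and> r2 \<le> c 2"
  by (simp add: mk_le_iff)

lemma apply_L: "x \<in> RR \<Longrightarrow> fst x \<le> c \<Longrightarrow> apply_rxn x c 0 = (if x = alp then c 0 - 2 else c 0)"
  apply (drule RR_cases) apply (elim disjE)
  by (simp_all only: apply_comp fst_mk_le) (auto simp: alp_def)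

lemma apply_VV: "x \<in> VV \<Longrightarrow> fst x \<le> c \<Longrightarrow> apply_rxn x c = c"
  unfolding apply_rxn_def le_fun_def using VV_void[of x] by (auto intro!: ext)

lemma apply_supp: "x \<in> RR \<Longrightarrow> supp_in SS c \<Longrightarrow> supp_in SS (apply_rxn x c)"
  apply (drule RR_cases) apply (elim disjE)
  by (auto simp: supp_in_def apply_rxn_def SS_def)

lemma apply_norm: "x \<in> RR \<Longrightarrow> fst x \<le> c \<Longrightarrow> norm1 SS (apply_rxn x c) = norm1 SS c"
  unfolding norm1_SS
  apply (drule RR_cases) apply (elim disjE)
  by (simp_all only: apply_comp fst_mk_le) simp_all

lemma apply_config: "x \<in> RR \<Longrightarrow> fst x \<le> c \<Longrightarrow> is_config SS c \<Longrightarrow> is_config SS (apply_rxn x c)"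
  using apply_supp apply_norm unfolding is_config_def by metis

lemma apply_pot: "x \<in> RR \<Longrightarrow> fst x \<le> c \<Longrightarrow>
   apply_rxn x c = c \<or> apply_rxn x c 0 + apply_rxn x c 1 < c 0 + c 1"
proof -
  assume x: "x \<in> RR" and le: "fst x \<le> c"
  have "x \<in> VV \<or> x = alp \<or> x = bet" using x unfolding RR_def by auto
  then show ?thesis
  proof (elim disjE)
    assume "x \<in> VV" then show ?thesis using apply_VV le by auto
  next
    assume "x = alp" then show ?thesis using le unfolding alp_def by (simp only: apply_comp fst_mk_le) simp
  next
    assume "x = bet" then show ?thesis using le unfolding bet_def by (simp only: apply_comp fst_mk_le) simp
  qed
qed

lemma step_pot: "step SS RR c c' \<Longrightarrow> c' = c \<or> c' 0 + c' 1 < c 0 + c 1"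
  unfolding step_def app_def using apply_pot by blast

lemma reach_pot: "reach SS RR c d \<Longrightarrow> d = c \<or> d 0 + d 1 < c 0 + c 1"
  unfolding reach_def
proof (induction rule: rtranclp_induct)
  case base then show ?case by simp
next
  case (step y z) then show ?case using step_pot[of y z] by auto
qed

lemma scc_single: "d \<in> scc SS RR c \<Longrightarrow> d = c"
proof -
  assume "d \<in> scc SS RR c"
  then have "reach SS RR c d" "reach SS RR d c" unfolding scc_def by auto
  then show "d = c" using reach_pot[of c d] reach_pot[of d c] by auto
qed

lemma step_L0: "c 0 = 0 \<Longrightarrow> step SS RR c c' \<Longrightarrow> c' = c"
proof -
  assume c0: "c 0 = 0" and st: "step SS RR c c'"
  then obtain x where x: "x \<in> RR" "fst x \<le> c" "c' = apply_rxn x c" unfolding step_def app_def by auto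
  have "x \<notin> {alp, bet}" using x(2) c0 by (auto simp: alp_def bet_def mk_le_iff)
  then have "x \<in> VV" using x(1) unfolding RR_def by auto
  then show ?thesis using apply_VV x by auto
qed

lemma reach_L0: "reach SS RR c d \<Longrightarrow> c 0 = 0 \<Longrightarrow> d = c"
  unfolding reach_def
proof (induction rule: rtranclp_induct)
  case base then show ?case by simp
next
  case (step y z) then show ?case using step_L0[of y z] by auto
qed

definition "CC = {(c0, c). c0 0 = 2 \<and> c 0 = (0::nat)}"

lemma target_CC: "target SS id CC c0 = {c. is_config SS c \<and> c0 0 = 2 \<and> c 0 = 0}"
  unfolding target_def CC_def by auto

lemma valid_CC: "valid SS id CC c0 \<longleftrightarrow> is_config SS c0 \<and> c0 0 = 2"
proof -
  have "is_config SS (mk 0 0 1)" unfolding is_config_def norm1_SS using supp_mk by simp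
  then show ?thesis unfolding valid_def target_CC by auto
qed

lemma halt_CC: "is_config SS c \<Longrightarrow> c0 0 = 2 \<Longrightarrow> c 0 = 0 \<Longrightarrow> c \<in> halt SS RR (target SS id CC c0)"
  unfolding halt_def target_CC using reach_L0 by auto

lemma exec_inv:
  assumes ex: "execution SS RR cs as" and c0: "cs 0 0 = 2"
  shows "is_config SS (cs t) \<and> norm1 SS (cs t) = norm1 SS (cs 0) \<and> (cs t 0 = 2 \<or> cs t 0 = 0)"
proof (induction t)
  case 0 then show ?case using ex c0 unfolding execution_def by simp
next
  case (Suc t)
  have x: "as t \<in> RR" "fst (as t) \<le> cs t" "cs (Suc t) = apply_rxn (as t) (cs t)"
    using ex unfolding execution_def app_def by auto
  show ?case using Suc x apply_config[OF x(1,2)] apply_norm[OF x(1,2)] apply_L[OF x(1,2)]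
    by (auto simp: alp_def mk_le_iff)
qed




definition Ls :: "'a set \<Rightarrow> nat \<Rightarrow> 'a list set" where "Ls R t = {xs. set xs \<subseteq> R \<and> length xs = t}"

lemma finite_Ls: "finite R \<Longrightarrow> finite (Ls R t)" unfolding Ls_def by (rule finite_lists_length_eq)

lemma Ls_0: "Ls R 0 = {[]}" unfolding Ls_def by auto

lemma Ls_Suc: "Ls R (Suc t) = (\<lambda>(xs, b). xs @ [b]) ` (Ls R t \<times> R)"
proof
  show "Ls R (Suc t) \<subseteq> (\<lambda>(xs, b). xs @ [b]) ` (Ls R t \<times> R)"
  proof
    fix ys assume "ys \<in> Ls R (Suc t)"
    then have h: "ys \<noteq> []" "set ys \<subseteq> R" "length ys = Suc t" by (auto simp: Ls_def)
    then have "ys = butlast ys @ [last ys]" "butlast ys \<in> Ls R t" "last ys \<in> R"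
      by (auto simp: Ls_def dest: in_set_butlastD)
    then show "ys \<in> (\<lambda>(xs, b). xs @ [b]) ` (Ls R t \<times> R)"
      by (metis (no_types, lifting) case_prod_conv image_eqI mem_Sigma_iff)
  qed
  show "(\<lambda>(xs, b). xs @ [b]) ` (Ls R t \<times> R) \<subseteq> Ls R (Suc t)" by (auto simp: Ls_def)
qed

lemma inj_snoc: "inj_on (\<lambda>(xs, b). xs @ [b]) X" by (auto simp: inj_on_def)

lemma sum_Ls_Suc: "(\<Sum>ys\<in>Ls R (Suc t). f ys) = (\<Sum>xs\<in>Ls R t. \<Sum>b\<in>R. f (xs @ [b]))"
  unfolding Ls_Suc sum.reindex[OF inj_snoc] sum.cartesian_product by (simp add: case_prod_beta)

lemma run_ne: "run c xs \<noteq> []" by (cases xs) auto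

lemma length_run: "length (run c xs) = Suc (length xs)" by (induction xs arbitrary: c) auto

definition wstep :: "real \<Rightarrow> rxn set \<Rightarrow> conf \<Rightarrow> rxn \<Rightarrow> real" where
  "wstep vol R d b = (if b \<in> app R d then propensity vol R d b / total_prop vol R d else 0)"

lemma pp_Cons: "path_prob vol R c (x # xs) = wstep vol R c x * path_prob vol R (apply_rxn x c) xs"
  by (simp add: wstep_def)

lemma pp_snoc: "path_prob vol R c (xs @ [b]) = path_prob vol R c xs * wstep vol R (last (run c xs)) b"
  by (induction xs arbitrary: c) (auto simp: run_ne wstep_def)

definition NN :: "real \<Rightarrow> rxn set \<Rightarrow> bool" where
  "NN vol R \<longleftrightarrow> (\<forall>c x. x \<in> R \<longrightarrow> 0 \<le> propensity vol R c x)"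

lemma NN_D: "NN vol R \<Longrightarrow> x \<in> R \<Longrightarrow> 0 \<le> propensity vol R c x"
  unfolding NN_def by blast

lemma total_nonneg: "NN vol R \<Longrightarrow> 0 \<le> total_prop vol R c"
  unfolding total_prop_def by (intro sum_nonneg) (rule NN_D)

lemma span_nonneg: "NN vol R \<Longrightarrow> 0 \<le> span vol R c"
  unfolding span_def using total_nonneg by simp

lemma wstep_nonneg: "NN vol R \<Longrightarrow> 0 \<le> wstep vol R c x"
  unfolding wstep_def app_def using total_nonneg[of vol R c] NN_D[of vol R x c]
  by (auto intro!: divide_nonneg_nonneg)

lemma pp_nonneg: "NN vol R \<Longrightarrow> 0 \<le> path_prob vol R c xs"
proof (induction xs arbitrary: c)
  case Nil then show ?case by simp
next
  case (Cons x xs) then show ?case unfolding pp_Cons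
    by (intro mult_nonneg_nonneg wstep_nonneg) auto
qed

lemma wstep_sum: assumes "finite R" "NN vol R" shows "(\<Sum>b\<in>R. wstep vol R c b) \<le> 1"
proof -
  have "(\<Sum>b\<in>R. wstep vol R c b) \<le> (\<Sum>b\<in>R. propensity vol R c b / total_prop vol R c)"
  proof (rule sum_mono)
    fix b assume "b \<in> R"
    then show "wstep vol R c b \<le> propensity vol R c b / total_prop vol R c"
      using NN_D[OF assms(2) \<open>b \<in> R\<close>, of c] total_nonneg[OF assms(2), of c] unfolding wstep_def
      by (auto intro!: divide_nonneg_nonneg)
  qed
  also have "\<dots> = total_prop vol R c / total_prop vol R c"
    unfolding total_prop_def by (rule sum_divide_distrib[symmetric])
  also have "\<dots> \<le> 1" by (cases "total_prop vol R c = 0") auto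
  finally show ?thesis .
qed

definition Aa where "Aa vol R c a t = (\<Sum>xs\<in>Ls R t. if a \<notin> set xs then path_prob vol R c (xs @ [a]) else 0)"
definition Mm where "Mm vol R c a t = (\<Sum>xs\<in>Ls R t. if a \<notin> set xs then path_prob vol R c xs else 0)"

lemma AM_step:
  assumes fin: "finite R" and aR: "a \<in> R" and nn: "NN vol R"
  shows "Aa vol R c a t + Mm vol R c a (Suc t) \<le> Mm vol R c a t"
proof -
  have "Aa vol R c a t + Mm vol R c a (Suc t) = (\<Sum>xs\<in>Ls R t.
     (if a \<notin> set xs then path_prob vol R c (xs @ [a]) else 0) +
     (\<Sum>b\<in>R. if a \<notin> set (xs @ [b]) then path_prob vol R c (xs @ [b]) else 0))"
    unfolding Aa_def Mm_def sum_Ls_Suc sum.distrib ..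
  also have "\<dots> \<le> (\<Sum>xs\<in>Ls R t. if a \<notin> set xs then path_prob vol R c xs else 0)"
  proof (rule sum_mono)
    fix xs
    show "(if a \<notin> set xs then path_prob vol R c (xs @ [a]) else 0) +
     (\<Sum>b\<in>R. if a \<notin> set (xs @ [b]) then path_prob vol R c (xs @ [b]) else 0)
      \<le> (if a \<notin> set xs then path_prob vol R c xs else 0)"
    proof (cases "a \<in> set xs")
      case True then show ?thesis by simp
    next
      case False
      let ?f = "\<lambda>b. path_prob vol R c (xs @ [b])"
      have e1: "(\<Sum>b\<in>R. if a \<notin> set (xs @ [b]) then ?f b else 0) = (\<Sum>b\<in>R - {a}. ?f b)"
      proof -
        have "(\<Sum>b\<in>R. if a \<notin> set (xs @ [b]) then ?f b else 0) =
           (if a \<notin> set (xs @ [a]) then ?f a else 0) + (\<Sum>b\<in>R - {a}. if a \<notin> set (xs @ [b]) then ?f b else 0)"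
          using sum.remove[OF fin aR] .
        also have "\<dots> = (\<Sum>b\<in>R - {a}. if a \<notin> set (xs @ [b]) then ?f b else 0)" by simp
        also have "\<dots> = (\<Sum>b\<in>R - {a}. ?f b)" using False by (intro sum.cong) auto
        finally show ?thesis .
      qed
      have e2: "?f a + (\<Sum>b\<in>R - {a}. ?f b) = (\<Sum>b\<in>R. ?f b)"
        using sum.remove[OF fin aR, of ?f] by simp
      have "(\<Sum>b\<in>R. ?f b) = path_prob vol R c xs * (\<Sum>b\<in>R. wstep vol R (last (run c xs)) b)"
        unfolding pp_snoc sum_distrib_left ..
      also have "\<dots> \<le> path_prob vol R c xs * 1"
        by (rule mult_left_mono[OF wstep_sum[OF fin nn] pp_nonneg[OF nn]])
      finally show ?thesis using False e1 e2 by simp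
    qed
  qed
  finally show ?thesis unfolding Mm_def .
qed

lemma Mm_nonneg: "NN vol R \<Longrightarrow> 0 \<le> Mm vol R c a t"
  unfolding Mm_def by (auto intro!: sum_nonneg pp_nonneg)

lemma Aa_nonneg: "NN vol R \<Longrightarrow> 0 \<le> Aa vol R c a t"
  unfolding Aa_def by (auto intro!: sum_nonneg pp_nonneg)

lemma Aa_tele:
  assumes fin: "finite R" and aR: "a \<in> R" and nn: "NN vol R"
  shows "(\<Sum>t<T. Aa vol R c a t) + Mm vol R c a T \<le> 1"
proof (induction T)
  case 0 then show ?case by (simp add: Mm_def Ls_0)
next
  case (Suc T) then show ?case using AM_step[OF assms, of c T] by simp
qed

lemma Aa_sum_le:
  assumes fin: "finite R" and aR: "a \<in> R" and nn: "NN vol R"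
  shows "(\<Sum>t<T. Aa vol R c a t) \<le> 1"
  using Aa_tele[OF assms, where T=T and c=c] Mm_nonneg[OF nn, of c a T] by simp




lemma stop_of_mem:
  assumes "a \<in> set xs"
  shows "\<exists>s. 0 < s \<and> s \<le> length xs \<and> stop_cond R (\<lambda>u. run c xs ! u) (\<lambda>i. xs ! i) 0 {a} s"
proof -
  obtain i where "i < length xs" "xs ! i = a" using assms by (auto simp: in_set_conv_nth)
  then have "0 < Suc i \<and> Suc i \<le> length xs \<and> stop_cond R (\<lambda>u. run c xs ! u) (\<lambda>i. xs ! i) 0 {a} (Suc i)"
    unfolding stop_cond_def by simp
  then show ?thesis by blast
qed

lemma TC_upper:
  assumes fin: "finite R" and aR: "a \<in> R" and nn: "NN vol R" and K: "0 \<le> K"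
    and H: "\<And>xs. set xs \<subseteq> R \<Longrightarrow> a \<notin> set xs \<Longrightarrow>
       path_prob vol R c xs * span vol R (last (run c xs)) \<le> K * path_prob vol R c (xs @ [a])"
  shows "TC vol R {a} c \<le> ennreal K"
proof -
  have trm: "(\<Sum>xs\<in>{xs. set xs \<subseteq> R \<and> length xs = t}. ennreal (path_prob vol R c xs *
        (if \<not> (\<exists>s. 0 < s \<and> s \<le> t \<and> stop_cond R (\<lambda>u. run c xs ! u) (\<lambda>i. xs ! i) 0 {a} s)
         then span vol R (last (run c xs)) else 0))) \<le> ennreal (K * Aa vol R c a t)" for t
  proof -
    have "(\<Sum>xs\<in>{xs. set xs \<subseteq> R \<and> length xs = t}. ennreal (path_prob vol R c xs *
        (if \<not> (\<exists>s. 0 < s \<and> s \<le> t \<and> stop_cond R (\<lambda>u. run c xs ! u) (\<lambda>i. xs ! i) 0 {a} s)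
         then span vol R (last (run c xs)) else 0))) \<le>
        (\<Sum>xs\<in>Ls R t. ennreal (K * (if a \<notin> set xs then path_prob vol R c (xs @ [a]) else 0)))"
      unfolding Ls_def
    proof (rule sum_mono)
      fix xs assume xs: "xs \<in> {xs. set xs \<subseteq> R \<and> length xs = t}"
      show "ennreal (path_prob vol R c xs *
        (if \<not> (\<exists>s. 0 < s \<and> s \<le> t \<and> stop_cond R (\<lambda>u. run c xs ! u) (\<lambda>i. xs ! i) 0 {a} s)
         then span vol R (last (run c xs)) else 0)) \<le>
         ennreal (K * (if a \<notin> set xs then path_prob vol R c (xs @ [a]) else 0))"
      proof (cases "a \<in> set xs")
        case True
        then have "\<exists>s. 0 < s \<and> s \<le> t \<and> stop_cond R (\<lambda>u. run c xs ! u) (\<lambda>i. xs ! i) 0 {a} s"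
          using stop_of_mem[OF True] xs by auto
        then show ?thesis using True by simp
      next
        case False
        have p0: "0 \<le> path_prob vol R c xs" by (rule pp_nonneg[OF nn])
        have s0: "0 \<le> span vol R (last (run c xs))" by (rule span_nonneg[OF nn])
        have "path_prob vol R c xs *
         (if \<not> (\<exists>s. 0 < s \<and> s \<le> t \<and> stop_cond R (\<lambda>u. run c xs ! u) (\<lambda>i. xs ! i) 0 {a} s)
         then span vol R (last (run c xs)) else 0) \<le> path_prob vol R c xs * span vol R (last (run c xs))"
          using p0 s0 by (intro mult_left_mono) auto
        also have "\<dots> \<le> K * path_prob vol R c (xs @ [a])" using H xs False by auto
        finally show ?thesis using False by (simp add: ennreal_leI)
      qed
    qed
    also have "\<dots> = ennreal (K * Aa vol R c a t)"
      unfolding Aa_def sum_distrib_left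
      by (rule sum_ennreal) (auto intro!: mult_nonneg_nonneg K pp_nonneg[OF nn])
    finally show ?thesis .
  qed
  show ?thesis unfolding TC_def
  proof (rule suminf_le_const[OF summableI])
    fix n
    have "(\<Sum>t<n. (\<Sum>xs\<in>{xs. set xs \<subseteq> R \<and> length xs = t}. ennreal (path_prob vol R c xs *
        (if \<not> (\<exists>s. 0 < s \<and> s \<le> t \<and> stop_cond R (\<lambda>u. run c xs ! u) (\<lambda>i. xs ! i) 0 {a} s)
         then span vol R (last (run c xs)) else 0)))) \<le> (\<Sum>t<n. ennreal (K * Aa vol R c a t))"
      by (rule sum_mono) (rule trm)
    also have "\<dots> = ennreal (K * (\<Sum>t<n. Aa vol R c a t))"
      unfolding sum_distrib_left
      by (rule sum_ennreal) (auto intro!: mult_nonneg_nonneg K Aa_nonneg[OF nn])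
    also have "\<dots> \<le> ennreal K"
      using Aa_sum_le[OF fin aR nn, of c n] K by (intro ennreal_leI) (simp add: mult_left_le)
    finally show "(\<Sum>t<n. (\<Sum>xs\<in>{xs. set xs \<subseteq> R \<and> length xs = t}. ennreal (path_prob vol R c xs *
        (if \<not> (\<exists>s. 0 < s \<and> s \<le> t \<and> stop_cond R (\<lambda>u. run c xs ! u) (\<lambda>i. xs ! i) 0 {a} s)
         then span vol R (last (run c xs)) else 0)))) \<le> ennreal K" .
  qed
qed

lemma apply_void: "snd x = fst x \<Longrightarrow> fst x \<le> c \<Longrightarrow> apply_rxn x c = c"
  unfolding apply_rxn_def le_fun_def by (auto intro!: ext)

lemma run_void:
  assumes void: "\<forall>v\<in>V. snd v = fst v" and xs: "set xs \<subseteq> V" and pp: "path_prob vol R c xs \<noteq> 0"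
  shows "run c xs = replicate (Suc (length xs)) c"
  using xs pp
proof (induction xs)
  case Nil then show ?case by simp
next
  case (Cons x xs)
  have "x \<in> app R c" using Cons.prems(2) by (auto split: if_splits)
  then have e: "apply_rxn x c = c" using void Cons.prems(1) by (intro apply_void) (auto simp: app_def)
  have "path_prob vol R c xs \<noteq> 0" using Cons.prems(2) by (simp add: e)
  then show ?case using Cons e by simp
qed

lemma pp_void:
  assumes void: "\<forall>v\<in>V. snd v = fst v" and xs: "set xs \<subseteq> V" and VR: "V \<subseteq> R"
    and inapp0: "\<forall>v\<in>V. \<not> fst v \<le> c \<longrightarrow> propensity vol R c v = 0"
  shows "path_prob vol R c xs = prod_list (map (\<lambda>v. propensity vol R c v / total_prop vol R c) xs)"
  using xs
proof (induction xs)
  case Nil then show ?case by simp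
next
  case (Cons x xs)
  show ?case
  proof (cases "fst x \<le> c")
    case True
    then have "x \<in> app R c" using Cons.prems VR by (auto simp: app_def)
    moreover have "apply_rxn x c = c" using void Cons.prems True by (intro apply_void) auto
    ultimately show ?thesis using Cons by simp
  next
    case False
    then have "x \<notin> app R c" by (auto simp: app_def)
    moreover have "propensity vol R c x = 0" using inapp0 Cons.prems False by auto
    ultimately show ?thesis by simp
  qed
qed

lemma sum_prod_power: fixes w :: "'a \<Rightarrow> real"
  shows "finite V \<Longrightarrow> (\<Sum>xs\<in>Ls V t. prod_list (map w xs)) = (\<Sum>v\<in>V. w v) ^ t"
proof (induction t)
  case 0 then show ?case by (simp add: Ls_0)
next
  case (Suc t)
  have "(\<Sum>xs\<in>Ls V (Suc t). prod_list (map w xs)) = (\<Sum>xs\<in>Ls V t. \<Sum>b\<in>V. prod_list (map w xs) * w b)"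
    unfolding sum_Ls_Suc by simp
  also have "\<dots> = (\<Sum>xs\<in>Ls V t. prod_list (map w xs)) * (\<Sum>v\<in>V. w v)"
    by (subst sum_distrib_right) (simp add: sum_distrib_left)
  finally show ?case using Suc by simp
qed

lemma TC_lower:
  assumes fin: "finite R" and VR: "V \<subseteq> R" and void: "\<forall>v\<in>V. snd v = fst v"
    and inapp0: "\<forall>v\<in>V. \<not> fst v \<le> c \<longrightarrow> propensity vol R c v = 0"
    and QV: "Q \<inter> V = {}" and bQ: "b \<in> Q" "b \<in> app R c"
    and nn: "NN vol R"
    and q: "q = (\<Sum>v\<in>V. propensity vol R c v) / total_prop vol R c" and q1: "q < 1"
  shows "ennreal (span vol R c / (1 - q)) \<le> TC vol R Q c"
proof -
  have finV: "finite V" using fin VR finite_subset by auto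
  have q0: "0 \<le> q" unfolding q using nn VR
    by (intro divide_nonneg_nonneg sum_nonneg total_nonneg) (auto intro: NN_D)
  have sp0: "0 \<le> span vol R c" by (rule span_nonneg[OF nn])
  let ?w = "\<lambda>v. propensity vol R c v / total_prop vol R c"
  have qw: "q = (\<Sum>v\<in>V. ?w v)" unfolding q by (rule sum_divide_distrib)
  have geo: "(\<Sum>t. ennreal (q ^ t * span vol R c)) = ennreal (span vol R c / (1 - q))"
  proof -
    have sm: "summable (\<lambda>t. q ^ t * span vol R c)"
      by (rule summable_mult2) (rule summable_geometric, use q0 q1 in auto)
    have "(\<Sum>t. ennreal (q ^ t * span vol R c)) = ennreal (\<Sum>t. q ^ t * span vol R c)"
      by (rule suminf_ennreal2[OF _ sm]) (use q0 sp0 in auto)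
    also have "(\<Sum>t. q ^ t * span vol R c) = (\<Sum>t. q ^ t) * span vol R c"
      by (rule suminf_mult2[symmetric]) (rule summable_geometric, use q0 q1 in auto)
    also have "\<dots> = span vol R c / (1 - q)"
      using suminf_geometric[of q] q0 q1 by simp
    finally show ?thesis .
  qed
  have each: "ennreal (q ^ t * span vol R c) \<le>
     (\<Sum>xs\<in>{xs. set xs \<subseteq> R \<and> length xs = t}. ennreal (path_prob vol R c xs *
        (if \<not> (\<exists>s. 0 < s \<and> s \<le> t \<and> stop_cond R (\<lambda>u. run c xs ! u) (\<lambda>i. xs ! i) 0 Q s)
         then span vol R (last (run c xs)) else 0)))" for t
  proof -
    have "q ^ t * span vol R c = (\<Sum>xs\<in>Ls V t. path_prob vol R c xs * span vol R c)"
    proof -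
      have "(\<Sum>xs\<in>Ls V t. path_prob vol R c xs * span vol R c) =
          (\<Sum>xs\<in>Ls V t. prod_list (map ?w xs)) * span vol R c"
        unfolding sum_distrib_right
        by (intro sum.cong refl arg_cong2[where f=times] pp_void[OF void _ VR inapp0]) (auto simp: Ls_def)
      also have "\<dots> = q ^ t * span vol R c" using sum_prod_power[OF finV, of ?w t] qw by simp
      finally show ?thesis by simp
    qed
    then have "ennreal (q ^ t * span vol R c) = (\<Sum>xs\<in>Ls V t. ennreal (path_prob vol R c xs * span vol R c))"
      using sum_ennreal[of "Ls V t" "\<lambda>xs. path_prob vol R c xs * span vol R c"]
        pp_nonneg[OF nn] sp0 by simp
    also have "\<dots> \<le> (\<Sum>xs\<in>Ls V t. ennreal (path_prob vol R c xs *
        (if \<not> (\<exists>s. 0 < s \<and> s \<le> t \<and> stop_cond R (\<lambda>u. run c xs ! u) (\<lambda>i. xs ! i) 0 Q s)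
         then span vol R (last (run c xs)) else 0)))"
    proof (rule sum_mono)
      fix xs assume "xs \<in> Ls V t"
      then have xs: "set xs \<subseteq> V" "length xs = t" by (auto simp: Ls_def)
      show "ennreal (path_prob vol R c xs * span vol R c) \<le> ennreal (path_prob vol R c xs *
        (if \<not> (\<exists>s. 0 < s \<and> s \<le> t \<and> stop_cond R (\<lambda>u. run c xs ! u) (\<lambda>i. xs ! i) 0 Q s)
         then span vol R (last (run c xs)) else 0))"
      proof (cases "path_prob vol R c xs = 0")
        case True then show ?thesis by simp
      next
        case False
        have rv: "run c xs = replicate (Suc (length xs)) c" by (rule run_void[OF void xs(1) False])
        have ns: "\<not> (\<exists>s. 0 < s \<and> s \<le> t \<and> stop_cond R (\<lambda>u. run c xs ! u) (\<lambda>i. xs ! i) 0 Q s)"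
        proof
          assume "\<exists>s. 0 < s \<and> s \<le> t \<and> stop_cond R (\<lambda>u. run c xs ! u) (\<lambda>i. xs ! i) 0 Q s"
          then obtain s where s: "0 < s" "s \<le> t" "stop_cond R (\<lambda>u. run c xs ! u) (\<lambda>i. xs ! i) 0 Q s" by blast
          have "xs ! (s - 1) \<in> V" using s xs by (auto intro!: subsetD[OF xs(1)] nth_mem)
          then have nq: "xs ! (s - 1) \<notin> Q" using QV by auto
          have ru: "run c xs ! u = c" if "u \<le> s" for u
            using rv nth_replicate[of u "Suc (length xs)" c] that s xs by simp
          have nu: "\<not> (\<exists>u. 0 \<le> u \<and> u \<le> s \<and> b \<notin> app R (run c xs ! u))"
            using ru bQ by auto
          have "xs ! (s - 1) \<in> Q \<or> (\<forall>\<beta>\<in>Q. \<exists>u. 0 \<le> u \<and> u \<le> s \<and> \<beta> \<notin> app R (run c xs ! u))"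
            using s(3) unfolding stop_cond_def by simp
          then show False using nq nu bQ(1) by blast
        qed
        have "last (run c xs) = c" using rv by simp
        then show ?thesis using ns by simp
      qed
    qed
    also have "\<dots> \<le> (\<Sum>xs\<in>{xs. set xs \<subseteq> R \<and> length xs = t}. ennreal (path_prob vol R c xs *
        (if \<not> (\<exists>s. 0 < s \<and> s \<le> t \<and> stop_cond R (\<lambda>u. run c xs ! u) (\<lambda>i. xs ! i) 0 Q s)
         then span vol R (last (run c xs)) else 0)))"
      by (rule sum_mono2[OF finite_lists_length_eq[OF fin]]) (use VR in \<open>auto simp: Ls_def\<close>)
    finally show ?thesis .
  qed
  have "ennreal (span vol R c / (1 - q)) = (\<Sum>t. ennreal (q ^ t * span vol R c))" using geo by simp
  also have "\<dots> \<le> TC vol R Q c" unfolding TC_def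
    by (rule suminf_le[OF each summableI summableI])
  finally show ?thesis .
qed




lemma prop_L1: "propensity vol RR c (mk (Suc 0) 0 0, p) = real (c 0)"
  using prop_L[of vol c p] unfolding One_nat_def .
lemma prop_A1: "propensity vol RR c (mk 0 (Suc 0) 0, p) = real (c 1)"
  using prop_A[of vol c p] unfolding One_nat_def .
lemma prop_B1: "propensity vol RR c (mk 0 0 (Suc 0), p) = real (c 2)"
  using prop_B[of vol c p] unfolding One_nat_def .

lemma NN_RR: "0 < vol \<Longrightarrow> NN vol RR"
  unfolding NN_def using prop_RR_nonneg by blast

lemma total_RR: "total_prop vol RR c = propensity vol RR c alp + propensity vol RR c bet + (\<Sum>v\<in>VV. propensity vol RR c v)"
proof -
  have "finite VV" by (simp add: VV_def)
  then show ?thesis unfolding total_prop_def RR_def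
    using alp_notin_VV bet_notin_VV alp_ne_bet by (simp add: sum.insert)
qed

lemma L_pres: "path_prob vol RR c xs \<noteq> 0 \<Longrightarrow> alp \<notin> set xs \<Longrightarrow> last (run c xs) 0 = c 0"
proof (induction xs arbitrary: c)
  case Nil then show ?case by simp
next
  case (Cons x xs)
  have xa: "x \<in> app RR c" using Cons.prems(1) by (auto split: if_splits)
  then have "apply_rxn x c 0 = c 0" using apply_L[of x c] Cons.prems(2) by (auto simp: app_def)
  moreover have "path_prob vol RR (apply_rxn x c) xs \<noteq> 0" using Cons.prems(1) by auto
  ultimately show ?case using Cons run_ne[of "apply_rxn x c" xs] by simp
qed

lemma TC_alp_upper:
  assumes vol: "0 < vol" and c0: "2 \<le> c 0"
  shows "TC vol RR {alp} c \<le> ennreal vol"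
proof (rule TC_upper[OF finite_RR alp_RR NN_RR[OF vol]])
  show "0 \<le> vol" using vol by simp
  fix xs assume xs: "set xs \<subseteq> RR" "alp \<notin> set xs"
  show "path_prob vol RR c xs * span vol RR (last (run c xs)) \<le> vol * path_prob vol RR c (xs @ [alp])"
  proof (cases "path_prob vol RR c xs = 0")
    case True then show ?thesis using pp_nonneg[OF NN_RR[OF vol]] vol by simp
  next
    case False
    let ?d = "last (run c xs)"
    have d0: "?d 0 = c 0" using L_pres[OF False xs(2)] .
    have app: "alp \<in> app RR ?d" using d0 c0 alp_RR by (simp add: app_def alp_def mk_le_iff)
    have "0 < ?d 0 choose 2" using d0 c0 zero_less_binomial[of 2 "?d 0"] by simp
    then have "Suc 0 \<le> ?d 0 choose 2" by (rule Suc_leI)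
    then have ch: "1 \<le> real (?d 0 choose 2)" by simp
    have T0: "0 \<le> total_prop vol RR ?d" by (rule total_nonneg[OF NN_RR[OF vol]])
    have p0: "0 \<le> path_prob vol RR c xs" by (rule pp_nonneg[OF NN_RR[OF vol]])
    have "path_prob vol RR c (xs @ [alp]) = path_prob vol RR c xs * (real (?d 0 choose 2) / vol / total_prop vol RR ?d)"
      unfolding pp_snoc wstep_def using app by (simp add: prop_alp)
    then have "vol * path_prob vol RR c (xs @ [alp]) = path_prob vol RR c xs * real (?d 0 choose 2) / total_prop vol RR ?d"
      using vol by simp
    moreover have "path_prob vol RR c xs * span vol RR ?d \<le> path_prob vol RR c xs * real (?d 0 choose 2) / total_prop vol RR ?d"
    proof -
      have "path_prob vol RR c xs * 1 \<le> path_prob vol RR c xs * real (?d 0 choose 2)"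
        by (rule mult_left_mono[OF ch p0])
      then have "path_prob vol RR c xs / total_prop vol RR ?d \<le> path_prob vol RR c xs * real (?d 0 choose 2) / total_prop vol RR ?d"
        using divide_right_mono[OF _ T0] by simp
      then show ?thesis unfolding span_def by simp
    qed
    ultimately show ?thesis by linarith
  qed
qed

lemma total_ge1: assumes vol: "0 < vol" and cfg: "is_config SS c" shows "1 \<le> total_prop vol RR c"
proof -
  have s: "1 \<le> c 0 + c 1 + c 2" using cfg unfolding is_config_def norm1_SS by simp
  have "\<exists>x\<in>RR. 1 \<le> propensity vol RR c x"
  proof (cases "1 \<le> c 0")
    case True
    have "(mk 1 0 0, mk 1 0 0) \<in> RR" by (simp add: RR_def VV_def)
    then show ?thesis using True prop_L[of vol c "mk 1 0 0"] by force
  next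
    case F0: False
    show ?thesis
    proof (cases "1 \<le> c 1")
      case True
      have "(mk 0 1 0, mk 0 1 0) \<in> RR" by (simp add: RR_def VV_def)
      then show ?thesis using True prop_A[of vol c "mk 0 1 0"] by force
    next
      case False
      then have "1 \<le> c 2" using s F0 by linarith
      have "(mk 0 0 1, mk 0 0 1) \<in> RR" by (simp add: RR_def VV_def)
      then show ?thesis using \<open>1 \<le> c 2\<close> prop_B[of vol c "mk 0 0 1"] by force
    qed
  qed
  then obtain x where x: "x \<in> RR" "1 \<le> propensity vol RR c x" by blast
  have "propensity vol RR c x \<le> total_prop vol RR c" unfolding total_prop_def
    by (rule member_le_sum[OF x(1) _ finite_RR]) (rule prop_RR_nonneg[OF _ vol], auto)
  then show ?thesis using x by linarith
qed

lemma TC_alp_inapp: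
  assumes vol: "0 < vol" and na: "alp \<notin> app RR c" and cfg: "is_config SS c"
  shows "TC vol RR {alp} c \<le> 1"
proof -
  have t1: "1 \<le> total_prop vol RR c" by (rule total_ge1[OF vol cfg])
  have trm: "(\<Sum>xs\<in>{xs. set xs \<subseteq> RR \<and> length xs = t}. ennreal (path_prob vol RR c xs *
        (if \<not> (\<exists>s. 0 < s \<and> s \<le> t \<and> stop_cond RR (\<lambda>u. run c xs ! u) (\<lambda>i. xs ! i) 0 {alp} s)
         then span vol RR (last (run c xs)) else 0))) \<le> (if t = 0 then 1 else 0)" for t
  proof (cases t)
    case 0
    have "{xs. set xs \<subseteq> RR \<and> length xs = t} = {[]}" using 0 by auto
    then show ?thesis using 0 t1 by (simp add: span_def)
  next
    case (Suc t')
    have "stop_cond RR (\<lambda>u. run c xs ! u) (\<lambda>i. xs ! i) 0 {alp} 1" for xs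
    proof -
      have "run c xs ! 0 = c" by (cases xs) auto
      then have "alp \<notin> app RR (run c xs ! 0)" using na by simp
      then have "\<forall>\<beta>\<in>{alp}. \<exists>u. 0 \<le> u \<and> u \<le> 1 \<and> \<beta> \<notin> app RR (run c xs ! u)" by blast
      then show ?thesis unfolding stop_cond_def by blast
    qed
    then have ex: "\<exists>s. 0 < s \<and> s \<le> t \<and> stop_cond RR (\<lambda>u. run c xs ! u) (\<lambda>i. xs ! i) 0 {alp} s" for xs
      using Suc by (metis One_nat_def Suc_le_mono le0 zero_less_one)
    have "(\<Sum>xs\<in>{xs. set xs \<subseteq> RR \<and> length xs = t}. ennreal (path_prob vol RR c xs *
        (if \<not> (\<exists>s. 0 < s \<and> s \<le> t \<and> stop_cond RR (\<lambda>u. run c xs ! u) (\<lambda>i. xs ! i) 0 {alp} s)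
         then span vol RR (last (run c xs)) else 0))) = 0"
      using ex by simp
    then show ?thesis using Suc by simp
  qed
  show ?thesis unfolding TC_def
  proof (rule suminf_le_const[OF summableI])
    fix n
    have "(\<Sum>t<n. (\<Sum>xs\<in>{xs. set xs \<subseteq> RR \<and> length xs = t}. ennreal (path_prob vol RR c xs *
        (if \<not> (\<exists>s. 0 < s \<and> s \<le> t \<and> stop_cond RR (\<lambda>u. run c xs ! u) (\<lambda>i. xs ! i) 0 {alp} s)
         then span vol RR (last (run c xs)) else 0)))) \<le> (\<Sum>t<n. (if t = 0 then 1 else 0))"
      by (rule sum_mono) (rule trm)
    also have "\<dots> \<le> 1" by (simp add: sum.delta)
    finally show "(\<Sum>t<n. (\<Sum>xs\<in>{xs. set xs \<subseteq> RR \<and> length xs = t}. ennreal (path_prob vol RR c xs *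
        (if \<not> (\<exists>s. 0 < s \<and> s \<le> t \<and> stop_cond RR (\<lambda>u. run c xs ! u) (\<lambda>i. xs ! i) 0 {alp} s)
         then span vol RR (last (run c xs)) else 0)))) \<le> 1" .
  qed
qed

lemma aux_div: fixes T S :: real
  shows "0 < T \<Longrightarrow> 0 < T - S \<Longrightarrow> (1 / T) / (1 - S / T) = 1 / (T - S)"
  by (simp add: field_simps)

lemma TC_RR_lower:
  assumes vol: "0 < vol" and c0: "c 0 = 2" and Q: "Q \<subseteq> {alp, bet}" and aQ: "alp \<in> Q"
  shows "ennreal (vol / (2 * real (c 1) + 1)) \<le> TC vol RR Q c"
proof -
  let ?S = "\<Sum>v\<in>VV. propensity vol RR c v"
  let ?T = "total_prop vol RR c"
  have pa: "propensity vol RR c alp = 1 / vol" using c0 by (simp add: prop_alp)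
  have pb: "propensity vol RR c bet = 2 * real (c 1) / vol" using c0 by (simp add: prop_bet)
  have S0: "0 \<le> ?S" using prop_RR_nonneg[OF _ vol] by (intro sum_nonneg) (auto simp: RR_def)
  have T: "?T = (2 * real (c 1) + 1) / vol + ?S" unfolding total_RR pa pb by (simp add: add_divide_distrib)
  have a0: "0 < (2 * real (c 1) + 1) / vol" using vol by simp
  have Tpos: "0 < ?T" using T a0 S0 by linarith
  have q1: "?S / ?T < 1" using Tpos T a0 by simp
  have VVR: "VV \<subseteq> RR" by (auto simp: RR_def)
  have "ennreal (span vol RR c / (1 - ?S / ?T)) \<le> TC vol RR Q c"
  proof (rule TC_lower[OF finite_RR VVR _ _ _ aQ _ NN_RR[OF vol] refl q1])
    show "\<forall>v\<in>VV. snd v = fst v" using VV_void by blast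
    show "\<forall>v\<in>VV. \<not> fst v \<le> c \<longrightarrow> propensity vol RR c v = 0" using prop_RR_inapp VVR by blast
    show "Q \<inter> VV = {}" using Q alp_notin_VV bet_notin_VV by auto
    show "alp \<in> app RR c" using c0 alp_RR by (simp add: app_def alp_def mk_le_iff)
  qed
  moreover have "span vol RR c / (1 - ?S / ?T) = vol / (2 * real (c 1) + 1)"
  proof -
    have d: "?T - ?S = (2 * real (c 1) + 1) / vol" using T by linarith
    have "span vol RR c / (1 - ?S / ?T) = 1 / (?T - ?S)" unfolding span_def
      by (rule aux_div[OF Tpos]) (simp only: d a0)
    also have "\<dots> = vol / (2 * real (c 1) + 1)" unfolding d by simp
    finally show ?thesis .
  qed
  ultimately show ?thesis by metis
qed




lemma reach_norm: "reach SS RR c d \<Longrightarrow> norm1 SS d = norm1 SS c"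
  unfolding reach_def
proof (induction rule: rtranclp_induct)
  case base then show ?case by simp
next
  case (step y z)
  then obtain x where "x \<in> RR" "fst x \<le> y" "z = apply_rxn x y" unfolding step_def app_def by auto
  then show ?case using step apply_norm by auto
qed

lemma alp_app_iff: "alp \<in> app RR c \<longleftrightarrow> 2 \<le> c 0"
  using alp_RR unfolding app_def alp_def by (simp add: mk_le_iff)

lemma exec_step: "execution S R cs as \<Longrightarrow> as t \<in> app R (cs t) \<and> cs (Suc t) = apply_rxn (as t) (cs t)"
  unfolding execution_def by blast

lemma exec_done1:
  assumes ex: "execution SS RR cs as" and c0: "cs 0 0 = 2" and a: "as s = alp"
  shows "cs (Suc s) 0 = 0"
proof -
  have "alp \<in> app RR (cs s)" "cs (Suc s) = apply_rxn alp (cs s)" using exec_step[OF ex, of s] a by auto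
  then show ?thesis using apply_L[OF alp_RR, of "cs s"] alp_app_iff exec_inv[OF ex c0, of s]
    by (auto simp: app_def)
qed

lemma exec_done2:
  assumes ex: "execution SS RR cs as" and c0: "cs 0 0 = 2" and a: "alp \<notin> app RR (cs s)"
  shows "cs s 0 = 0"
  using exec_inv[OF ex c0, of s] a alp_app_iff by auto

lemma hc: "halting_correct SS RR id CC"
  unfolding halting_correct_def
proof (intro allI impI, elim conjE)
  fix cs as assume ex: "execution SS RR cs as" and wf: "weakly_fair RR cs as" and v: "valid SS id CC (cs 0)"
  have c0: "cs 0 0 = 2" using v valid_CC by auto
  have "alp \<in> app RR (cs 0)" using c0 alp_app_iff by simp
  then obtain s where "as s = alp \<or> alp \<notin> app RR (cs s)" using wf unfolding weakly_fair_def by blast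
  then have "\<exists>t. cs t 0 = 0" using exec_done1[OF ex c0] exec_done2[OF ex c0] by blast
  then obtain t where "cs t 0 = 0" by blast
  then have "cs t \<in> halt SS RR (target SS id CC (cs 0))" using halt_CC exec_inv[OF ex c0] c0 by blast
  then show "\<exists>t. cs t \<in> halt SS RR (target SS id CC (cs 0))" by blast
qed

lemma hs_le:
  assumes ex: "execution SS RR cs as" and c0: "cs 0 0 = 2" and u: "cs u 0 = 0"
  shows "halting_step SS RR id CC cs \<le> u"
proof -
  have "is_config SS (cs u)" using exec_inv[OF ex c0, of u] by blast
  then have "cs u \<in> halt SS RR (target SS id CC (cs 0))" using halt_CC c0 u by blast
  then show ?thesis unfolding halting_step_def by (rule Least_le)
qed

lemma tau_spec: "\<exists>s. t < s \<and> stop_cond R cs as t Q s \<Longrightarrow>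
  t < tau R cs as t Q \<and> stop_cond R cs as t Q (tau R cs as t Q)"
  unfolding tau_def
  apply (rule LeastI_ex)
  apply assumption
  done

lemma RT_upper:
  assumes ex: "execution SS RR cs as" and wf: "weakly_fair RR cs as" and c0: "cs 0 0 = 2"
    and vol: "0 < vol"
  shows "RT_pol vol SS RR id CC (\<lambda>_. {alp}) \<sigma> cs as \<le> ennreal (max vol 1)"
proof -
  let ?tz = "\<sigma> 0"
  have ex_s: "\<exists>s. ?tz < s \<and> stop_cond RR cs as ?tz {alp} s"
  proof (cases "alp \<in> app RR (cs ?tz)")
    case True
    then obtain s' where s': "s' \<ge> ?tz" "as s' = alp \<or> alp \<notin> app RR (cs s')"
      using wf unfolding weakly_fair_def by blast
    then have "stop_cond RR cs as ?tz {alp} (Suc s')" unfolding stop_cond_def by auto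
    then show ?thesis using s' le_imp_less_Suc by blast
  next
    case False
    then have "stop_cond RR cs as ?tz {alp} (Suc ?tz)" unfolding stop_cond_def by auto
    then show ?thesis by blast
  qed
  let ?s = "tau RR cs as ?tz {alp}"
  have st: "?tz < ?s \<and> stop_cond RR cs as ?tz {alp} ?s" by (rule tau_spec[OF ex_s])
  have "\<exists>u \<le> ?s. cs u 0 = 0"
  proof -
    from st have "as (?s - 1) = alp \<or> (\<exists>u. ?tz \<le> u \<and> u \<le> ?s \<and> alp \<notin> app RR (cs u))"
      unfolding stop_cond_def by auto
    then show ?thesis
    proof
      assume a: "as (?s - 1) = alp"
      have "Suc (?s - 1) = ?s" using st by simp
      then show ?thesis using exec_done1[OF ex c0 a] by (metis le_refl)
    next
      assume "\<exists>u. ?tz \<le> u \<and> u \<le> ?s \<and> alp \<notin> app RR (cs u)"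
      then show ?thesis using exec_done2[OF ex c0] by blast
    qed
  qed
  then have hs: "halting_step SS RR id CC cs \<le> ?s" using hs_le[OF ex c0] le_trans by blast
  have rs1: "round_start RR (\<lambda>_. {alp}) \<sigma> cs as (Suc 0) = ?s" by simp
  have istar: "(LEAST i. halting_step SS RR id CC cs \<le> round_start RR (\<lambda>_. {alp}) \<sigma> cs as i) \<le> Suc 0"
    by (rule Least_le) (simp only: rs1 hs)
  have "RT_pol vol SS RR id CC (\<lambda>_. {alp}) \<sigma> cs as =
     (\<Sum>i<(LEAST i. halting_step SS RR id CC cs \<le> round_start RR (\<lambda>_. {alp}) \<sigma> cs as i).
        TC vol RR {alp} (cs (\<sigma> (round_start RR (\<lambda>_. {alp}) \<sigma> cs as i))))"
    unfolding RT_pol_def Let_def ..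
  also have "\<dots> \<le> (\<Sum>i<Suc 0. TC vol RR {alp} (cs (\<sigma> (round_start RR (\<lambda>_. {alp}) \<sigma> cs as i))))"
    by (rule sum_mono2) (use istar in auto)
  also have "\<dots> = TC vol RR {alp} (cs ?tz)" by simp
  also have "\<dots> \<le> ennreal (max vol 1)"
  proof (cases "2 \<le> cs ?tz 0")
    case True
    then have "TC vol RR {alp} (cs ?tz) \<le> ennreal vol" by (rule TC_alp_upper[OF vol])
    also have "\<dots> \<le> ennreal (max vol 1)" by (rule ennreal_leI) simp
    finally show ?thesis .
  next
    case False
    then have "TC vol RR {alp} (cs ?tz) \<le> 1"
      using TC_alp_inapp[OF vol _ conjunct1[OF exec_inv[OF ex c0, of ?tz]]] alp_app_iff by blast
    also have "(1::ennreal) \<le> ennreal (max vol 1)" by (simp add: ennreal_leI[of 1 "max vol 1", simplified])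
    finally show ?thesis .
  qed
  finally show ?thesis .
qed

lemma harm_ln: "ln (real m + 1) / 2 \<le> (\<Sum>j<m. 1 / (2 * real j + 1))"
proof (induction m)
  case 0 then show ?case by simp
next
  case (Suc m)
  have "ln (real m + 2) - ln (real m + 1) = ln ((real m + 2) / (real m + 1))"
    by (simp add: ln_div)
  also have "\<dots> \<le> (real m + 2) / (real m + 1) - 1" by (rule ln_le_minus_one) simp
  also have "\<dots> = 1 / (real m + 1)" by (simp add: field_simps)
  finally have d: "ln (real m + 2) - ln (real m + 1) \<le> 1 / (real m + 1)" .
  have "1 / (real m + 1) \<le> 2 / (2 * real m + 1)" by (simp add: field_simps)
  with d have "ln (real m + 2) / 2 \<le> ln (real m + 1) / 2 + 1 / (2 * real m + 1)" by simp
  then show ?case using Suc by (simp add: add.commute)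
qed




definition csL :: "nat \<Rightarrow> nat \<Rightarrow> conf" where
  "csL k t = (if t \<le> k then mk 2 (k - t) t else mk 0 0 (k + 2))"
definition "vB = (mk 0 0 1, mk 0 0 1)"
definition "vBB = (mk 0 0 2, mk 0 0 2)"
definition asL :: "nat \<Rightarrow> nat \<Rightarrow> rxn" where
  "asL k t = (if t < k then bet else if t = k then alp else if even t then vB else vBB)"

lemma vB_RR: "vB \<in> RR" and vBB_RR: "vBB \<in> RR" by (simp_all add: RR_def VV_def vB_def vBB_def)

lemma cfg_mk: "1 \<le> a + b + d \<Longrightarrow> is_config SS (mk a b d)"
  unfolding is_config_def norm1_SS using supp_mk by simp

lemma cfg_L: "is_config SS (csL k t)"
  unfolding csL_def by (auto intro!: cfg_mk)

lemma exec_L_step: "asL k t \<in> app RR (csL k t) \<and> csL k (Suc t) = apply_rxn (asL k t) (csL k t)"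
  proof (cases "t < k")
    case True
    then show ?thesis using bet_RR[unfolded bet_def] unfolding asL_def csL_def app_def bet_def
      by (simp add: mk_le_iff apply_mk)
  next
    case False
    show ?thesis
    proof (cases "t = k")
      case True then show ?thesis using alp_RR[unfolded alp_def] unfolding asL_def csL_def app_def alp_def
        by (simp add: mk_le_iff apply_mk)
    next
      case False2: False
      then have "t > k" using False by simp
      then show ?thesis using vB_RR[unfolded vB_def] vBB_RR[unfolded vBB_def]
        unfolding asL_def csL_def app_def vB_def vBB_def by (simp add: mk_le_iff apply_mk)
    qed
  qed

lemma exec_L: "execution SS RR (csL k) (asL k)"
  unfolding execution_def using cfg_L exec_L_step by blast

lemma app_final: "\<beta> \<in> app RR (mk 0 0 m) \<Longrightarrow> \<beta> = vB \<or> \<beta> = vBB"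
  unfolding app_def
  apply (clarify, drule RR_cases) apply (elim disjE)
  by (simp_all add: mk_le_iff vB_def vBB_def)

lemma wf_L: "weakly_fair RR (csL k) (asL k)"
  unfolding weakly_fair_def
proof (intro allI ballI)
  fix t \<beta> assume "\<beta> \<in> app RR (csL k t)"
  let ?s = "max t (Suc k)"
  have c1: "csL k ?s = mk 0 0 (k+2)" "csL k (Suc ?s) = mk 0 0 (k+2)" by (auto simp: csL_def)
  show "\<exists>s\<ge>t. asL k s = \<beta> \<or> \<beta> \<notin> app RR (csL k s)"
  proof (cases "\<beta> \<in> app RR (mk 0 0 (k+2))")
    case False
    then have "?s \<ge> t \<and> (asL k ?s = \<beta> \<or> \<beta> \<notin> app RR (csL k ?s))" using c1 by simp
    then show ?thesis by blast
  next
    case True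
    then have b: "\<beta> = vB \<or> \<beta> = vBB" by (rule app_final)
    have a1: "asL k ?s = (if even ?s then vB else vBB)" "asL k (Suc ?s) = (if even (Suc ?s) then vB else vBB)"
      by (auto simp: asL_def)
    have "asL k ?s = \<beta> \<or> asL k (Suc ?s) = \<beta>"
      using b a1 by (cases "even ?s") auto
    then show ?thesis by (metis le_Suc_eq max.cobounded1)
  qed
qed

lemma tau_Suc: "as i \<in> Q \<Longrightarrow> tau R cs as i Q = Suc i"
  unfolding tau_def
  by (rule Least_equality) (auto simp: stop_cond_def)

lemma rs_L: assumes "\<forall>i\<le>k. asL k i \<in> \<rho> (csL k i)"
  shows "i \<le> Suc k \<Longrightarrow> round_start RR \<rho> (\<lambda>t. t) (csL k) (asL k) i = i"
proof (induction i)
  case 0 then show ?case by simp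
next
  case (Suc i)
  then have "i \<le> k" by simp
  then show ?case using Suc assms tau_Suc by simp
qed

lemma esc_alp: assumes c0: "2 \<le> c 0" shows "alp \<in> escape SS RR c"
  unfolding escape_def
proof (intro CollectI conjI alp_RR ballI)
  fix d assume "d \<in> scc SS RR c" then have d: "d = c" by (rule scc_single)
  show "alp \<in> app RR d" using d alp_app_iff c0 by simp
  show "apply_rxn alp d \<notin> scc SS RR c"
  proof
    assume "apply_rxn alp d \<in> scc SS RR c" then have "apply_rxn alp c = c" using d scc_single by auto
    then have "apply_rxn alp c 0 = c 0" by simp
    moreover have "apply_rxn alp c 0 = c 0 - 2"
      using apply_L[OF alp_RR, of c] alp_app_iff[of c] c0 by (simp add: app_def)
    ultimately show False using c0 by simp
  qed
qed

lemma esc_bet: assumes c0: "1 \<le> c 0" and c1: "1 \<le> c 1" shows "bet \<in> escape SS RR c"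
  unfolding escape_def
proof (intro CollectI conjI bet_RR ballI)
  fix d assume "d \<in> scc SS RR c" then have d: "d = c" by (rule scc_single)
  show "bet \<in> app RR d" using d c0 c1 bet_RR unfolding app_def bet_def by (simp add: mk_le_iff)
  show "apply_rxn bet d \<notin> scc SS RR c"
  proof
    assume "apply_rxn bet d \<in> scc SS RR c" then have "apply_rxn bet c = c" using d scc_single by auto
    then have "apply_rxn bet c 1 = c 1" by simp
    moreover have "apply_rxn bet c 1 = c 1 - 1" unfolding bet_def by (simp only: apply_comp)
    ultimately show False using c1 by simp
  qed
qed

lemma hs_L: "halting_step SS RR id CC (csL k) = Suc k"
  unfolding halting_step_def
proof (rule Least_equality)
  show "csL k (Suc k) \<in> halt SS RR (target SS id CC (csL k 0))"
    by (rule halt_CC) (auto simp: csL_def intro!: cfg_mk)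
  fix y assume "csL k y \<in> halt SS RR (target SS id CC (csL k 0))"
  then have "csL k y 0 = 0" unfolding halt_def target_CC by auto
  then show "Suc k \<le> y" by (cases "y \<le> k") (auto simp: csL_def)
qed

lemma sum_rev_harm: "(\<Sum>i<Suc k. 1 / (2 * real (k - i) + 1)) = (\<Sum>j<Suc k. 1 / (2 * real j + 1))"
  using sum.nat_diff_reindex[of "\<lambda>j. 1 / (2 * real j + 1)" "Suc k"] by simp

lemma RT_lower_L:
  assumes vol: "0 < vol" and pol: "\<forall>c. is_config SS c \<longrightarrow> escape SS RR c \<subseteq> \<rho> c"
    and rp: "runtime_policy SS RR \<rho>"
  shows "ennreal (vol * ln (real k + 2) / 2) \<le> RT_pol vol SS RR id CC \<rho> (\<lambda>t. t) (csL k) (asL k)"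
proof -
  have cL: "i \<le> k \<Longrightarrow> csL k i = mk 2 (k - i) i" for i by (simp add: csL_def)
  have aQ: "alp \<in> \<rho> (csL k i)" if "i \<le> k" for i
  proof -
    have "escape SS RR (csL k i) \<subseteq> \<rho> (csL k i)" using pol cfg_L by blast
    moreover have "alp \<in> escape SS RR (csL k i)" by (rule esc_alp) (simp add: cL[OF that])
    ultimately show ?thesis by blast
  qed
  have Qs: "\<rho> (csL k i) \<subseteq> {alp, bet}" for i
    using rp cfg_L unfolding runtime_policy_def NV_RR by blast
  have asQ: "\<forall>i\<le>k. asL k i \<in> \<rho> (csL k i)"
  proof (intro allI impI)
    fix i assume i: "i \<le> k"
    show "asL k i \<in> \<rho> (csL k i)"
    proof (cases "i < k")
      case True
      have "bet \<in> escape SS RR (csL k i)" using cL[OF i] True by (intro esc_bet) auto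
      moreover have "escape SS RR (csL k i) \<subseteq> \<rho> (csL k i)" using pol cfg_L by blast
      ultimately show ?thesis using True unfolding asL_def by auto
    next
      case False then show ?thesis using aQ[OF i] i unfolding asL_def by auto
    qed
  qed
  have rs: "i \<le> Suc k \<Longrightarrow> round_start RR \<rho> (\<lambda>t. t) (csL k) (asL k) i = i" for i
    by (rule rs_L[OF asQ])
  have istar: "(LEAST i. halting_step SS RR id CC (csL k) \<le> round_start RR \<rho> (\<lambda>t. t) (csL k) (asL k) i) = Suc k"
  proof (rule Least_equality)
    show "halting_step SS RR id CC (csL k) \<le> round_start RR \<rho> (\<lambda>t. t) (csL k) (asL k) (Suc k)"
      using rs[of "Suc k"] hs_L by simp
    fix y assume y: "halting_step SS RR id CC (csL k) \<le> round_start RR \<rho> (\<lambda>t. t) (csL k) (asL k) y"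
    show "Suc k \<le> y"
    proof (rule ccontr)
      assume "\<not> Suc k \<le> y"
      then have "y \<le> Suc k" "y < Suc k" by auto
      then show False using y rs[of y] hs_L by simp
    qed
  qed
  have "RT_pol vol SS RR id CC \<rho> (\<lambda>t. t) (csL k) (asL k) = (\<Sum>i<Suc k. TC vol RR (\<rho> (csL k i)) (csL k i))"
    unfolding RT_pol_def Let_def istar using rs by (intro sum.cong) auto
  also have "\<dots> \<ge> (\<Sum>i<Suc k. ennreal (vol / (2 * real (k - i) + 1)))"
  proof (rule sum_mono)
    fix i assume "i \<in> {..<Suc k}"
    then have i: "i \<le> k" by simp
    have "ennreal (vol / (2 * real (csL k i 1) + 1)) \<le> TC vol RR (\<rho> (csL k i)) (csL k i)"
      by (rule TC_RR_lower[OF vol _ Qs aQ[OF i]]) (simp add: cL[OF i])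
    then show "ennreal (vol / (2 * real (k - i) + 1)) \<le> TC vol RR (\<rho> (csL k i)) (csL k i)"
      using cL[OF i] by simp
  qed
  also have "(\<Sum>i<Suc k. ennreal (vol / (2 * real (k - i) + 1))) = ennreal (\<Sum>i<Suc k. vol / (2 * real (k - i) + 1))"
    by (rule sum_ennreal) (use vol in auto)
  also have "(\<Sum>i<Suc k. vol / (2 * real (k - i) + 1)) = vol * (\<Sum>j<Suc k. 1 / (2 * real j + 1))"
    unfolding sum_rev_harm[symmetric] sum_distrib_left by simp
  finally have r: "ennreal (vol * (\<Sum>j<Suc k. 1 / (2 * real j + 1))) \<le> RT_pol vol SS RR id CC \<rho> (\<lambda>t. t) (csL k) (asL k)" .
  have "vol * ln (real k + 2) / 2 \<le> vol * (\<Sum>j<Suc k. 1 / (2 * real j + 1))"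
    using harm_ln[of "Suc k"] vol by (simp add: add.commute)
  then show ?thesis using r by (meson ennreal_leI order.trans)
qed




lemma interface_CC: "interface SS UNIV id CC" unfolding interface_def by simp

lemma fd_CC: "finite_density SS RR id CC"
  unfolding finite_density_def
  by (rule exI[of _ 1]) (auto dest: reach_norm)

lemma upper_part:
  assumes pos: "\<forall>n. 0 < \<phi> n" and th: "\<phi> \<in> \<Theta>(\<lambda>n. real n)"
  shows "\<exists>K::real. \<exists>N. \<forall>n\<ge>N. RT_halt \<phi> SS RR id CC UNIV n \<le> ennreal (K * real n)"
proof -
  from bigthetaD1[OF th] obtain c where c: "c > 0" "eventually (\<lambda>n. norm (\<phi> n) \<le> c * norm (real n)) at_top"
    by (elim landau_o.bigE)
  then obtain N where N: "\<And>n. n \<ge> N \<Longrightarrow> norm (\<phi> n) \<le> c * norm (real n)"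
    by (auto simp: eventually_at_top_linorder)
  have "RT_halt \<phi> SS RR id CC UNIV n \<le> ennreal ((c + 1) * real n)" if n: "n \<ge> max N 1" for n
  proof -
    have "RT_halt \<phi> SS RR id CC UNIV n \<le> ennreal (max (\<phi> n) 1)"
      unfolding RT_halt_def
      apply (rule INF_lower2[of "\<lambda>_. {alp}"])
       apply (simp add: runtime_policy_def NV_RR)
      apply (rule SUP_least)
      apply clarify
      apply (rule RT_upper)
         apply (auto simp: valid_CC pos)
      done
    also have "\<dots> \<le> ennreal ((c + 1) * real n)"
    proof (rule ennreal_leI)
      have "\<phi> n \<le> c * real n" using N[of n] n by simp
      moreover have "1 \<le> real n" using n by simp
      moreover have "0 \<le> c * real n" using c(1) by simp
      ultimately show "max (\<phi> n) 1 \<le> (c + 1) * real n" by (auto simp: distrib_right max_def)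
    qed
    finally show ?thesis .
  qed
  then show ?thesis by blast
qed

lemma lower_part:
  assumes pos: "\<forall>n. 0 < \<phi> n" and th: "\<phi> \<in> \<Theta>(\<lambda>n. real n)"
  shows "\<exists>K::real>0. \<exists>N. \<forall>n\<ge>N. ennreal (K * real n * ln (real n))
               \<le> RT_halt \<phi> SS RR id CC {\<rho>. \<forall>c. is_config SS c \<longrightarrow> escape SS RR c \<subseteq> \<rho> c} n"
proof -
  from bigthetaD2[OF th] obtain c where c: "c > 0" "eventually (\<lambda>n. norm (\<phi> n) \<ge> c * norm (real n)) at_top"
    by (elim landau_omega.bigE)
  then obtain N where N: "\<And>n. n \<ge> N \<Longrightarrow> norm (\<phi> n) \<ge> c * norm (real n)"
    by (auto simp: eventually_at_top_linorder)
  have "ennreal (c / 2 * real n * ln (real n))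
     \<le> RT_halt \<phi> SS RR id CC {\<rho>. \<forall>c. is_config SS c \<longrightarrow> escape SS RR c \<subseteq> \<rho> c} n"
    if n: "n \<ge> max N 2" for n
  proof -
    define k where "k = n - 2"
    have nk: "n = k + 2" using n k_def by arith
    have phin: "c * real n \<le> \<phi> n" using N[of n] n pos[rule_format, of n] by simp
    have ln0: "0 \<le> ln (real n)" using n by simp
    have bound: "ennreal (c / 2 * real n * ln (real n)) \<le> ennreal (\<phi> n * ln (real k + 2) / 2)"
    proof (rule ennreal_leI)
      have "real k + 2 = real n" using nk by simp
      moreover have "c * real n * ln (real n) \<le> \<phi> n * ln (real n)"
        by (rule mult_right_mono[OF phin ln0])
      ultimately show "c / 2 * real n * ln (real n) \<le> \<phi> n * ln (real k + 2) / 2" by simp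
    qed
    have mem: "(csL k, asL k, \<lambda>t::nat. t) \<in> {(cs, as, \<sigma>). execution SS RR cs as \<and> weakly_fair RR cs as
              \<and> valid SS id CC (cs 0) \<and> norm1 SS (cs 0) = n \<and> (\<forall>t. t \<le> \<sigma> t)}"
      using exec_L wf_L cfg_L[of k 0] nk by (simp add: valid_CC csL_def norm1_SS)
    show ?thesis
      unfolding RT_halt_def
    proof (rule INF_greatest)
      fix \<rho> assume "\<rho> \<in> {\<rho> \<in> {\<rho>. \<forall>c. is_config SS c \<longrightarrow> escape SS RR c \<subseteq> \<rho> c}. runtime_policy SS RR \<rho>}"
      then have pol: "\<forall>c. is_config SS c \<longrightarrow> escape SS RR c \<subseteq> \<rho> c" and rp: "runtime_policy SS RR \<rho>" by auto
      have "ennreal (c / 2 * real n * ln (real n)) \<le> RT_pol (\<phi> n) SS RR id CC \<rho> (\<lambda>t. t) (csL k) (asL k)"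
        using bound RT_lower_L[OF pos[rule_format] pol rp, of n k] by (rule order.trans)
      then show "ennreal (c / 2 * real n * ln (real n)) \<le> (SUP (cs, as, \<sigma>)\<in>{(cs, as, \<sigma>). execution SS RR cs as \<and> weakly_fair RR cs as
              \<and> valid SS id CC (cs 0) \<and> norm1 SS (cs 0) = n \<and> (\<forall>t. t \<le> \<sigma> t)}.
          RT_pol (\<phi> n) SS RR id CC \<rho> \<sigma> cs as)"
        by (intro SUP_upper2[OF mem]) simp
    qed
  qed
  moreover have "c / 2 > 0" using c by simp
  ultimately show ?thesis by blast
qed

theorem proposition7p4:
  shows "\<exists>S R U \<mu> C. crn S R \<and> interface S U \<mu> C \<and> finite_density S R \<mu> C
     \<and> halting_correct S R \<mu> C
     \<and> (\<forall>\<phi>::nat \<Rightarrow> real. (\<forall>n. 0 < \<phi> n) \<and> \<phi> \<in> \<Theta>(\<lambda>n. real n) \<longrightarrow>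
          (\<exists>K::real. \<exists>N. \<forall>n\<ge>N. RT_halt \<phi> S R \<mu> C UNIV n \<le> ennreal (K * real n))
        \<and> (\<exists>K::real>0. \<exists>N. \<forall>n\<ge>N.
             ennreal (K * real n * ln (real n))
               \<le> RT_halt \<phi> S R \<mu> C {\<rho>. \<forall>c. is_config S c \<longrightarrow> escape S R c \<subseteq> \<rho> c} n))"
  using crn_RR interface_CC fd_CC hc upper_part lower_part by blast


end
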